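(* Let $n\ge 3$ and let $c=(c_1,\ldots,c_n)\in\{0,1,2\}^n$ be a stable configuration on the wheel graph $W_n$. Then $c$ is SSM-recurrent (resp. ASM-recurrent) if and only if there exists an orientation (resp. an acyclic orientation) $\mathcal O$ of the cycle graph $C_n$ such that $c_i\ge \mathrm{in}_{\mathcal O}(i)$ for all $i\in[n]$, where $\mathrm{in}_{\mathcal O}(i)$ is the in-degree of $i$ in $\mathcal O$.
   Context: The cycle graph $C_n$ has vertex set $[n]=\{1,\ldots,n\}$ and edges $\{i,i+1\}$ ($1\le i\le n-1$) and $\{n,1\}$. The wheel graph $W_n$ is obtained from $C_n$ by adding a vertex $0$ (the sink) adjacent to every vertex of $[n]$. Sandpile setting: a configuration on a graph with vertex set $\{0,\ldots,n\}$ and sink $0$ is $c\in\mathbb{Z}_{\ge0}^n$; vertex $i$ is stable if $c_i<\deg(i)$, $c$ stable if all $i\in[n]$ are (on $W_n$ the stable configurations are exactly $\{0,1,2\}^n$). ASM: an unstable vertex loses $\deg(i)$ grains and sends one to each neighbour (grains to the sink vanish); stabilisation is order independent; the ASM Markov chain on stable configurations adds a grain at a vertex chosen by a fully supported distribution on $[n]$ and stabilises. SSM with parameter $p\in(0,1)$: a toppling vertex sends, independently for each neighbour, one grain to that neighbour with probability $p$ (else keeps it); Markov chain defined likewise. ASM-/SSM-recurrent = recurrent state of the respective chain. Known characterisation: a stable $c$ is ASM-recurrent iff there is an acyclic orientation $\mathcal O$ of the whole graph in which $0$ is the unique vertex with all incident edges incoming ($0$-rooted) and $c_i\ge\mathrm{in}_{\mathcal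 O}(i)$ for all $i\in[n]$; SSM-recurrent iff there is such a $0$-rooted orientation, not necessarily acyclic. *)

theory Defs
  imports Main
begin

(* Wheel graph W_n: sink 0, cycle vertices 1..n, cycle edges {k, cyc_succ n k}, k = 1..n,
   plus edges {0,k}.  Every non-sink vertex has degree 3 (n >= 3). *)

definition cyc_succ :: "nat \<Rightarrow> nat \<Rightarrow> nat" where
  "cyc_succ n i = (if i = n then 1 else i + 1)"

definition cyc_pred :: "nat \<Rightarrow> nat \<Rightarrow> nat" where
  "cyc_pred n i = (if i = 1 then n else i - 1)"

(* Orientation of C_n: ori k = True means edge {k, cyc_succ n k} is directed k -> cyc_succ n k,
   ori k = False means cyc_succ n k -> k.  Only values on k in 1..n matter. *)
definition cyc_arc :: "nat \<Rightarrow> (nat \<Rightarrow> bool) \<Rightarrow> nat \<Rightarrow> nat \<Rightarrow> bool" where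
  "cyc_arc n ori u v \<longleftrightarrow> (\<exists>k\<in>{1..n}. (ori k \<and> u = k \<and> v = cyc_succ n k)
                                  \<or> (\<not> ori k \<and> u = cyc_succ n k \<and> v = k))"

definition cyc_indeg :: "nat \<Rightarrow> (nat \<Rightarrow> bool) \<Rightarrow> nat \<Rightarrow> nat" where
  "cyc_indeg n ori i = card {k\<in>{1..n}. (ori k \<and> i = cyc_succ n k) \<or> (\<not> ori k \<and> i = k)}"

definition cyc_acyclic :: "nat \<Rightarrow> (nat \<Rightarrow> bool) \<Rightarrow> bool" where
  "cyc_acyclic n ori \<longleftrightarrow> \<not> (\<exists>u. (cyc_arc n ori)\<^sup>+\<^sup>+ u u)"

(* Configurations on W_n: functions nat => nat supported on 1..n (value at the sink 0 and
   elsewhere is 0). *)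
definition wheel_stable :: "nat \<Rightarrow> (nat \<Rightarrow> nat) \<Rightarrow> bool" where
  "wheel_stable n c \<longleftrightarrow> (\<forall>i. (i \<in> {1..n} \<longrightarrow> c i < 3) \<and> (i \<notin> {1..n} \<longrightarrow> c i = 0))"

definition add_grain :: "(nat \<Rightarrow> nat) \<Rightarrow> nat \<Rightarrow> (nat \<Rightarrow> nat)" where
  "add_grain c i = c(i := c i + 1)"

(* ASM toppling of an unstable vertex i: loses deg = 3 grains, one to each neighbour;
   the grain sent to the sink vanishes. *)
definition asm_step :: "nat \<Rightarrow> (nat \<Rightarrow> nat) \<Rightarrow> (nat \<Rightarrow> nat) \<Rightarrow> bool" where
  "asm_step n c c' \<longleftrightarrow> (\<exists>i\<in>{1..n}. 3 \<le> c i \<and>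
     c' = (\<lambda>j. if j = i then c i - 3
               else if j = cyc_succ n i \<or> j = cyc_pred n i then c j + 1 else c j))"

(* SSM toppling of an unstable vertex i: for each neighbour independently a grain is sent
   with probability p in (0,1); every subset S of the neighbours {0, pred, succ} occurs
   with positive probability. *)
definition ssm_step :: "nat \<Rightarrow> (nat \<Rightarrow> nat) \<Rightarrow> (nat \<Rightarrow> nat) \<Rightarrow> bool" where
  "ssm_step n c c' \<longleftrightarrow> (\<exists>i\<in>{1..n}. 3 \<le> c i \<and>
     (\<exists>S \<subseteq> {0, cyc_pred n i, cyc_succ n i}.
        c' = (\<lambda>j. if j = i then c i - card S
                  else if j \<in> S - {0} then c j + 1 else c j)))"

(* Support of the transition kernels of the Markov chains on stable configurations:
   add a grain at some vertex (fully supported distribution) and stabilise. *)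
definition asm_trans :: "nat \<Rightarrow> (nat \<Rightarrow> nat) \<Rightarrow> (nat \<Rightarrow> nat) \<Rightarrow> bool" where
  "asm_trans n c d \<longleftrightarrow> wheel_stable n c \<and> wheel_stable n d \<and>
     (\<exists>i\<in>{1..n}. (asm_step n)\<^sup>*\<^sup>* (add_grain c i) d)"

definition ssm_trans :: "nat \<Rightarrow> (nat \<Rightarrow> nat) \<Rightarrow> (nat \<Rightarrow> nat) \<Rightarrow> bool" where
  "ssm_trans n c d \<longleftrightarrow> wheel_stable n c \<and> wheel_stable n d \<and>
     (\<exists>i\<in>{1..n}. (ssm_step n)\<^sup>*\<^sup>* (add_grain c i) d)"

(* Recurrent state of a finite Markov chain: every state reachable from c leads back to c. *)
definition asm_recurrent :: "nat \<Rightarrow> (nat \<Rightarrow> nat) \<Rightarrow> bool" where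
  "asm_recurrent n c \<longleftrightarrow> wheel_stable n c \<and>
     (\<forall>d. (asm_trans n)\<^sup>*\<^sup>* c d \<longrightarrow> (asm_trans n)\<^sup>*\<^sup>* d c)"

definition ssm_recurrent :: "nat \<Rightarrow> (nat \<Rightarrow> nat) \<Rightarrow> bool" where
  "ssm_recurrent n c \<longleftrightarrow> wheel_stable n c \<and>
     (\<forall>d. (ssm_trans n)\<^sup>*\<^sup>* c d \<longrightarrow> (ssm_trans n)\<^sup>*\<^sup>* d c)"

end

theory Submission
  imports Defs
begin

lemma succ_in: "v \<in> {1..n} \<Longrightarrow> cyc_succ n v \<in> {1..n}"
  unfolding cyc_succ_def by auto
lemma pred_in: "v \<in> {1..n} \<Longrightarrow> cyc_pred n v \<in> {1..n}"
  unfolding cyc_pred_def by auto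
lemma pred_succ[simp]: "v \<in> {1..n} \<Longrightarrow> cyc_pred n (cyc_succ n v) = v"
  unfolding cyc_succ_def cyc_pred_def by auto
lemma succ_pred[simp]: "v \<in> {1..n} \<Longrightarrow> cyc_succ n (cyc_pred n v) = v"
  unfolding cyc_succ_def cyc_pred_def by auto
lemma succ_neq: "3 \<le> n \<Longrightarrow> v \<in> {1..n} \<Longrightarrow> cyc_succ n v \<noteq> v"
  unfolding cyc_succ_def by auto
lemma pred_neq: "3 \<le> n \<Longrightarrow> v \<in> {1..n} \<Longrightarrow> cyc_pred n v \<noteq> v"
  unfolding cyc_pred_def by auto
lemma succ_neq_pred: "3 \<le> n \<Longrightarrow> v \<in> {1..n} \<Longrightarrow> cyc_succ n v \<noteq> cyc_pred n v"
  unfolding cyc_succ_def cyc_pred_def by auto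
lemma succ_eq_iff: "u \<in> {1..n} \<Longrightarrow> v \<in> {1..n} \<Longrightarrow> (cyc_succ n u = v) = (u = cyc_pred n v)"
  unfolding cyc_succ_def cyc_pred_def by auto
lemma pp_neq_s: "4 \<le> n \<Longrightarrow> v \<in> {1..n} \<Longrightarrow> cyc_pred n (cyc_pred n v) \<noteq> cyc_succ n v"
  unfolding cyc_succ_def cyc_pred_def by auto
lemma pp_eq_s3: "n = 3 \<Longrightarrow> v \<in> {1..n} \<Longrightarrow> cyc_pred n (cyc_pred n v) = cyc_succ n v"
  unfolding cyc_succ_def cyc_pred_def by auto

lemma indeg_formula:
  assumes "3 \<le> n" "v \<in> {1..n}"
  shows "cyc_indeg n ori v = (if ori (cyc_pred n v) then 1 else 0) + (if ori v then 0 else 1)"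
proof -
  have eq: "{k\<in>{1..n}. (ori k \<and> v = cyc_succ n k) \<or> (\<not> ori k \<and> v = k)}
      = (if ori (cyc_pred n v) then {cyc_pred n v} else {}) \<union> (if ori v then {} else {v})"
    using assms pred_in[OF assms(2)] succ_eq_iff[of _ n v]
    by (auto split: if_splits)
  have "cyc_pred n v \<noteq> v" using pred_neq assms by auto
  then show ?thesis unfolding cyc_indeg_def eq by auto
qed

definition rot :: "nat \<Rightarrow> nat \<Rightarrow> nat \<Rightarrow> nat" where
  "rot n t u = (u - 1 + t) mod n + 1"

lemma rot_0: "u \<in> {1..n} \<Longrightarrow> rot n 0 u = u"
  unfolding rot_def by auto
lemma rot_in: "0 < n \<Longrightarrow> rot n t u \<in> {1..n}"
  unfolding rot_def by (auto simp: Suc_le_eq)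
lemma rot_Suc: "0 < n \<Longrightarrow> rot n (Suc t) u = cyc_succ n (rot n t u)"
proof -
  assume n: "0 < n"
  have "(u - 1 + Suc t) mod n = Suc ((u - 1 + t) mod n) mod n" by (simp add: mod_Suc_eq)
  then show ?thesis unfolding rot_def cyc_succ_def using n
    by (auto simp: mod_Suc)
qed
lemma rot_succ_arg: "u \<in> {1..n} \<Longrightarrow> rot n t (cyc_succ n u) = rot n (Suc t) u"
proof -
  assume u: "u \<in> {1..n}"
  show ?thesis
  proof (cases "u = n")
    case True
    then show ?thesis unfolding rot_def cyc_succ_def using u
      by (simp add: mod_Suc_eq)
  next
    case False
    then show ?thesis unfolding rot_def cyc_succ_def using u by auto
  qed
qed
lemma rot_surj: "u \<in> {1..n} \<Longrightarrow> k \<in> {1..n} \<Longrightarrow> \<exists>t<n. k = rot n t u"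
proof -
  assume u: "u \<in> {1..n}" and k: "k \<in> {1..n}"
  define t where "t = (k + n - u) mod n"
  have "t < n" using u unfolding t_def by auto
  moreover have "k = rot n t u"
  proof -
    have "(u - 1 + (k + n - u) mod n) mod n = (u - 1 + (k + n - u)) mod n"
      by (simp add: mod_add_right_eq)
    also have "u - 1 + (k + n - u) = (k - 1) + n" using u k by auto
    also have "((k - 1) + n) mod n = (k - 1) mod n" by (rule mod_add_self2)
    also have "\<dots> = k - 1" using k by auto
    finally show ?thesis unfolding rot_def t_def using k by auto
  qed
  ultimately show ?thesis by blast
qed
lemma rot_self: "u \<in> {1..n} \<Longrightarrow> rot n d u = u \<Longrightarrow> n dvd d"
proof -
  assume u: "u \<in> {1..n}" and r: "rot n d u = u"
  have "(u - 1 + d) mod n = u - 1" using r u unfolding rot_def by linarith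
  also have "u - 1 = (u - 1) mod n" using u by auto
  finally have "(u - 1 + d) mod n = (u - 1) mod n" .
  then have "n dvd ((u - 1 + d) - (u - 1))" using mod_eq_dvd_iff_nat[of "u - 1" "u - 1 + d" n] by simp
  then show ?thesis by simp
qed

lemma arc_iff: "cyc_arc n ori u v \<longleftrightarrow> (\<exists>k\<in>{1..n}. (ori k \<and> u = k \<and> v = cyc_succ n k) \<or> (\<not> ori k \<and> u = cyc_succ n k \<and> v = k))"
  by (simp add: cyc_arc_def)

lemma walk:
  assumes n: "3 \<le> n" and w: "(cyc_arc n ori)\<^sup>+\<^sup>+ u w"
  shows "u \<in> {1..n} \<and> ((\<exists>d\<ge>1. w = rot n d u \<and> (\<forall>t<d. ori (rot n t u))) \<or>
                        (\<exists>d\<ge>1. u = rot n d w \<and> (\<forall>t<d. \<not> ori (rot n t w))))"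
  using w
proof (induction rule: tranclp.induct)
  case (r_into_trancl u w)
  then obtain k where k: "k \<in> {1..n}" and
    c: "(ori k \<and> u = k \<and> w = cyc_succ n k) \<or> (\<not> ori k \<and> u = cyc_succ n k \<and> w = k)"
    by (auto simp: arc_iff)
  from c show ?case
  proof
    assume h: "ori k \<and> u = k \<and> w = cyc_succ n k"
    then have "w = rot n 1 u" using k n rot_Suc[of n 0 u] rot_0[of u n] by auto
    moreover have "\<forall>t<1. ori (rot n t u)" using h k rot_0[of u n] by auto
    ultimately show ?thesis using h k by (intro conjI disjI1 exI[of _ 1]) auto
  next
    assume h: "\<not> ori k \<and> u = cyc_succ n k \<and> w = k"
    then have "u = rot n 1 w" using k n rot_Suc[of n 0 w] rot_0[of w n] by auto
    moreover have "\<forall>t<1. \<not> ori (rot n t w)" using h k rot_0[of w n] by auto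
    moreover have "u \<in> {1..n}" using h k succ_in by blast
    ultimately show ?thesis by (intro conjI disjI2 exI[of _ 1]) auto
  qed
next
  case (trancl_into_trancl u v w)
  from trancl_into_trancl.hyps(2) obtain k where k: "k \<in> {1..n}" and
    c: "(ori k \<and> v = k \<and> w = cyc_succ n k) \<or> (\<not> ori k \<and> v = cyc_succ n k \<and> w = k)"
    by (auto simp: arc_iff)
  have u: "u \<in> {1..n}" using trancl_into_trancl.IH by auto
  from trancl_into_trancl.IH have
    "(\<exists>d\<ge>1. v = rot n d u \<and> (\<forall>t<d. ori (rot n t u))) \<or>
     (\<exists>d\<ge>1. u = rot n d v \<and> (\<forall>t<d. \<not> ori (rot n t v)))" by auto
  then show ?case
  proof
    assume "\<exists>d\<ge>1. v = rot n d u \<and> (\<forall>t<d. ori (rot n t u))"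
    then obtain d where d: "d \<ge> 1" "v = rot n d u" "\<forall>t<d. ori (rot n t u)" by blast
    from c show ?thesis
    proof
      assume h: "ori k \<and> v = k \<and> w = cyc_succ n k"
      have "w = rot n (Suc d) u" using h d n rot_Suc[of n d u] by auto
      moreover have "\<forall>t<Suc d. ori (rot n t u)" using h d by (auto simp: less_Suc_eq)
      ultimately show ?thesis using u by (intro conjI disjI1 exI[of _ "Suc d"]) auto
    next
      assume h: "\<not> ori k \<and> v = cyc_succ n k \<and> w = k"
      obtain d' where d': "d = Suc d'" using d(1) by (cases d) auto
      have "cyc_succ n k = cyc_succ n (rot n d' u)" using h d d' n rot_Suc[of n d' u] by auto
      then have "cyc_pred n (cyc_succ n k) = cyc_pred n (cyc_succ n (rot n d' u))" by simp
      then have "k = rot n d' u" using k rot_in[of n d' u] n by simp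
      moreover have "ori (rot n d' u)" using d d' by simp
      ultimately have False using h by simp
      then show ?thesis by simp
    qed
  next
    assume "\<exists>d\<ge>1. u = rot n d v \<and> (\<forall>t<d. \<not> ori (rot n t v))"
    then obtain d where d: "d \<ge> 1" "u = rot n d v" "\<forall>t<d. \<not> ori (rot n t v)" by blast
    have v: "v \<in> {1..n}" using trancl_into_trancl.hyps(2) succ_in[of _ n] by (auto simp: arc_iff)
    from c show ?thesis
    proof
      assume h: "ori k \<and> v = k \<and> w = cyc_succ n k"
      have "\<not> ori (rot n 0 v)" using d by simp
      then have False using h v rot_0[of v n] by simp
      then show ?thesis by simp
    next
      assume h: "\<not> ori k \<and> v = cyc_succ n k \<and> w = k"
      have "u = rot n (Suc d) w" using d h k rot_succ_arg[of k n d] by auto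
      moreover have "\<forall>t<Suc d. \<not> ori (rot n t w)"
      proof (intro allI impI)
        fix t assume t: "t < Suc d"
        show "\<not> ori (rot n t w)"
        proof (cases t)
          case 0 then show ?thesis using h k rot_0[of k n] by auto
        next
          case (Suc t') then show ?thesis using d t h k rot_succ_arg[of k n t'] by auto
        qed
      qed
      ultimately show ?thesis using u by (intro conjI disjI2 exI[of _ "Suc d"]) auto
    qed
  qed
qed

lemma acyclic_if:
  assumes n: "3 \<le> n" and j: "j \<in> {1..n}" "ori j" and k: "k \<in> {1..n}" "\<not> ori k"
  shows "cyc_acyclic n ori"
  unfolding cyc_acyclic_def
proof
  assume "\<exists>u. (cyc_arc n ori)\<^sup>+\<^sup>+ u u"
  then obtain u where "(cyc_arc n ori)\<^sup>+\<^sup>+ u u" by blast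
  from walk[OF n this] have u: "u \<in> {1..n}" and
    c: "(\<exists>d\<ge>1. u = rot n d u \<and> (\<forall>t<d. ori (rot n t u))) \<or>
        (\<exists>d\<ge>1. u = rot n d u \<and> (\<forall>t<d. \<not> ori (rot n t u)))" by auto
  from c show False
  proof
    assume "\<exists>d\<ge>1. u = rot n d u \<and> (\<forall>t<d. ori (rot n t u))"
    then obtain d where d: "d \<ge> 1" "u = rot n d u" "\<forall>t<d. ori (rot n t u)" by blast
    have "n dvd d" using rot_self[OF u] d by auto
    then have "n \<le> d" using d(1) by (simp add: dvd_imp_le)
    obtain t where "t < n" "k = rot n t u" using rot_surj[OF u k(1)] by blast
    then show False using d k `n \<le> d` by auto
  next
    assume "\<exists>d\<ge>1. u = rot n d u \<and> (\<forall>t<d. \<not> ori (rot n t u))"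
    then obtain d where d: "d \<ge> 1" "u = rot n d u" "\<forall>t<d. \<not> ori (rot n t u)" by blast
    have "n dvd d" using rot_self[OF u] d by auto
    then have "n \<le> d" using d(1) by (simp add: dvd_imp_le)
    obtain t where "t < n" "j = rot n t u" using rot_surj[OF u j(1)] by blast
    then show False using d j `n \<le> d` by auto
  qed
qed

lemma rot_n_1: "0 < n \<Longrightarrow> rot n n 1 = 1"
  unfolding rot_def by auto

lemma acyclic_nonconst:
  assumes n: "3 \<le> n" and a: "cyc_acyclic n ori"
  shows "\<exists>j\<in>{1..n}. \<exists>k\<in>{1..n}. ori j \<and> \<not> ori k"
proof (rule ccontr)
  assume "\<not> ?thesis"
  then have c: "(\<forall>k\<in>{1..n}. ori k) \<or> (\<forall>k\<in>{1..n}. \<not> ori k)" by blast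
  have n0: "0 < n" using n by auto
  from c show False
  proof
    assume all: "\<forall>k\<in>{1..n}. ori k"
    have "(cyc_arc n ori)\<^sup>+\<^sup>+ 1 (rot n (Suc t) 1)" for t
    proof (induction t)
      case 0
      have "cyc_arc n ori 1 (rot n (Suc 0) 1)"
        using all n rot_Suc[OF n0, of 0 1] rot_0[of 1 n] by (auto simp: arc_iff)
      then show ?case by auto
    next
      case (Suc t)
      have "cyc_arc n ori (rot n (Suc t) 1) (rot n (Suc (Suc t)) 1)"
        using all rot_in[OF n0] rot_Suc[OF n0, of "Suc t" 1] unfolding arc_iff by blast
      then show ?case using Suc by (meson tranclp.trancl_into_trancl)
    qed
    from this[of "n - 1"] have "(cyc_arc n ori)\<^sup>+\<^sup>+ 1 1" using rot_n_1[OF n0] n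
      by (metis Suc_diff_1 n0)
    then show False using a unfolding cyc_acyclic_def by blast
  next
    assume all: "\<forall>k\<in>{1..n}. \<not> ori k"
    have "(cyc_arc n ori)\<^sup>+\<^sup>+ (rot n (Suc t) 1) 1" for t
    proof (induction t)
      case 0
      have "cyc_arc n ori (rot n (Suc 0) 1) 1"
        using all n rot_Suc[OF n0, of 0 1] rot_0[of 1 n] by (auto simp: arc_iff)
      then show ?case by auto
    next
      case (Suc t)
      have "cyc_arc n ori (rot n (Suc (Suc t)) 1) (rot n (Suc t) 1)"
        using all rot_in[OF n0] rot_Suc[OF n0, of "Suc t" 1] unfolding arc_iff by blast
      then show ?case using Suc by (meson tranclp_into_tranclp2)
    qed
    from this[of "n - 1"] have "(cyc_arc n ori)\<^sup>+\<^sup>+ 1 1" using rot_n_1[OF n0] n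
      by (metis Suc_diff_1 n0)
    then show False using a unfolding cyc_acyclic_def by blast
  qed
qed

definition ind :: "nat \<Rightarrow> (nat \<Rightarrow> bool) \<Rightarrow> nat \<Rightarrow> nat" where
  "ind n ori v = (if ori (cyc_pred n v) then 1 else 0) + (if ori v then 0 else 1)"

definition goodS :: "nat \<Rightarrow> (nat \<Rightarrow> nat) \<Rightarrow> bool" where
  "goodS n c \<longleftrightarrow> (\<exists>ori. \<forall>i\<in>{1..n}. ind n ori i \<le> c i)"

definition goodA :: "nat \<Rightarrow> (nat \<Rightarrow> nat) \<Rightarrow> bool" where
  "goodA n c \<longleftrightarrow> (\<exists>ori. cyc_acyclic n ori \<and> (\<forall>i\<in>{1..n}. ind n ori i \<le> c i))"

lemma goodS_iff: "3 \<le> n \<Longrightarrow> goodS n c \<longleftrightarrow> (\<exists>ori. \<forall>i\<in>{1..n}. c i \<ge> cyc_indeg n ori i)"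
  unfolding goodS_def using indeg_formula unfolding ind_def by simp

lemma goodA_iff: "3 \<le> n \<Longrightarrow> goodA n c \<longleftrightarrow> (\<exists>ori. cyc_acyclic n ori \<and> (\<forall>i\<in>{1..n}. c i \<ge> cyc_indeg n ori i))"
  unfolding goodA_def using indeg_formula unfolding ind_def by simp

lemma goodA_goodS: "goodA n c \<Longrightarrow> goodS n c"
  unfolding goodA_def goodS_def by blast

lemma goodS_mono: "goodS n c \<Longrightarrow> (\<forall>i\<in>{1..n}. c i \<le> c' i) \<Longrightarrow> goodS n c'"
  unfolding goodS_def by (meson order_trans)
lemma goodA_mono: "goodA n c \<Longrightarrow> (\<forall>i\<in>{1..n}. c i \<le> c' i) \<Longrightarrow> goodA n c'"
  unfolding goodA_def by (meson order_trans)

lemma add_grain_ge: "\<forall>j. c j \<le> add_grain c i j"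
  unfolding add_grain_def by auto

lemma ind_upd_other:
  assumes n: "3 \<le> n" and i: "i \<in> {1..n}" and v: "v \<in> {1..n}"
    and "v \<noteq> i" "v \<noteq> cyc_pred n i" "v \<noteq> cyc_succ n i"
  shows "ind n (ori(cyc_pred n i := a, i := b)) v = ind n ori v"
proof -
  have "cyc_pred n v \<noteq> cyc_pred n i"
    using assms by (metis succ_pred)
  moreover have "cyc_pred n v \<noteq> i"
    using assms by (metis succ_pred)
  ultimately show ?thesis using assms unfolding ind_def by auto
qed

lemma ind_upd_i:
  assumes n: "3 \<le> n" and i: "i \<in> {1..n}"
  shows "ind n (ori(cyc_pred n i := a, i := b)) i = (if a then 1 else 0) + (if b then 0 else 1)"
  using pred_neq[OF n i] unfolding ind_def by auto

lemma ind_upd_s: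
  assumes n: "3 \<le> n" and i: "i \<in> {1..n}"
  shows "ind n (ori(cyc_pred n i := a, i := b)) (cyc_succ n i) =
         (if b then 1 else 0) + (if ori (cyc_succ n i) then 0 else 1)"
  using succ_neq[OF n i] succ_neq_pred[OF n i] i unfolding ind_def by auto

lemma ind_upd_p:
  assumes n: "3 \<le> n" and i: "i \<in> {1..n}"
  shows "ind n (ori(cyc_pred n i := a, i := b)) (cyc_pred n i) =
         (if ori (cyc_pred n (cyc_pred n i)) then 1 else 0) + (if a then 0 else 1)"
proof -
  have "cyc_pred n (cyc_pred n i) \<noteq> cyc_pred n i" using pred_neq[OF n pred_in[OF i]] .
  moreover have "cyc_pred n (cyc_pred n i) \<noteq> i"
    using succ_neq_pred[OF n i] i pred_in[OF i] by (metis succ_pred)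
  moreover have "cyc_pred n i \<noteq> i" using pred_neq[OF n i] .
  ultimately show ?thesis unfolding ind_def by auto
qed

lemma ind_le2: "ind n ori v \<le> 2" unfolding ind_def by auto

lemma ind_ge1: "ind n ori v \<ge> (if ori v then 0 else 1)" unfolding ind_def by auto
lemma ind_ge2: "ind n ori v \<ge> (if ori (cyc_pred n v) then 1 else 0)" unfolding ind_def by auto
lemma ind_s: "i \<in> {1..n} \<Longrightarrow> ind n ori (cyc_succ n i) = (if ori i then 1 else 0) + (if ori (cyc_succ n i) then 0 else 1)"
  unfolding ind_def by simp

lemma asm_step_goodA:
  assumes n: "3 \<le> n" and g: "goodA n c" and st: "asm_step n c c'"
  shows "goodA n c'"
proof -
  obtain i where i: "i \<in> {1..n}" "3 \<le> c i" and c': "c' = (\<lambda>j. if j = i then c i - 3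
               else if j = cyc_succ n i \<or> j = cyc_pred n i then c j + 1 else c j)"
    using st unfolding asm_step_def by blast
  obtain ori where a: "cyc_acyclic n ori" and le: "\<forall>v\<in>{1..n}. ind n ori v \<le> c v"
    using g unfolding goodA_def by blast
  define ori' where "ori' = ori(cyc_pred n i := False, i := True)"
  have pi: "cyc_pred n i \<noteq> i" using pred_neq[OF n i(1)] .
  have a': "cyc_acyclic n ori'"
    using acyclic_if[OF n i(1), of ori' "cyc_pred n i"] pred_in[OF i(1)] pi unfolding ori'_def by auto
  have "ind n ori' v \<le> c' v" if v: "v \<in> {1..n}" for v
  proof -
    consider "v = i" | "v = cyc_succ n i" | "v = cyc_pred n i" | "v \<noteq> i \<and> v \<noteq> cyc_succ n i \<and> v \<noteq> cyc_pred n i" by blast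
    then show ?thesis
    proof cases
      case 1 then show ?thesis using ind_upd_i[OF n i(1)] unfolding ori'_def by simp
    next
      case 2
      have "ind n ori (cyc_succ n i) \<le> c (cyc_succ n i)" using le succ_in[OF i(1)] by blast
      moreover have "c' (cyc_succ n i) = c (cyc_succ n i) + 1" using succ_neq[OF n i(1)] unfolding c' by simp
      moreover have "ind n ori' (cyc_succ n i) = 1 + (if ori (cyc_succ n i) then 0 else 1)"
        using ind_upd_s[OF n i(1), of ori False True] unfolding ori'_def by simp
      ultimately show ?thesis using 2 ind_ge1[where n=n and ori=ori and v="cyc_succ n i"] by simp
    next
      case 3
      have "ind n ori (cyc_pred n i) \<le> c (cyc_pred n i)" using le pred_in[OF i(1)] by blast
      moreover have "c' (cyc_pred n i) = c (cyc_pred n i) + 1" using pred_neq[OF n i(1)] unfolding c' by simp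
      moreover have "ind n ori' (cyc_pred n i) = (if ori (cyc_pred n (cyc_pred n i)) then 1 else 0) + 1"
        using ind_upd_p[OF n i(1), of ori False True] unfolding ori'_def by simp
      ultimately show ?thesis using 3 ind_ge2[where n=n and ori=ori and v="cyc_pred n i"] by simp
    next
      case 4
      then show ?thesis using ind_upd_other[OF n i(1) v, of ori False True] le v
        unfolding ori'_def c' by auto
    qed
  qed
  then show ?thesis unfolding goodA_def using a' by blast
qed

lemma card_S_le:
  assumes "S \<subseteq> {0, p, s}"
  shows "card S \<le> 1 + (if p \<in> S then 1 else 0) + (if s \<in> S then 1 else 0)"
proof -
  have e: "S = ((S \<inter> {0}) \<union> (S \<inter> {p})) \<union> (S \<inter> {s})" using assms by blast
  have "card S \<le> card ((S \<inter> {0}) \<union> (S \<inter> {p})) + card (S \<inter> {s})"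
    by (subst e) (rule card_Un_le)
  also have "\<dots> \<le> card (S \<inter> {0}) + card (S \<inter> {p}) + card (S \<inter> {s})"
    using card_Un_le[of "S \<inter> {0}" "S \<inter> {p}"] by linarith
  also have "card (S \<inter> {0}) \<le> 1" by (rule order_trans[OF card_mono[of "{0}"]]) auto
  also have "card (S \<inter> {p}) = (if p \<in> S then 1 else 0)" by auto
  also have "card (S \<inter> {s}) = (if s \<in> S then 1 else 0)" by auto
  finally show ?thesis by simp
qed

lemma ssm_step_goodS:
  assumes n: "3 \<le> n" and g: "goodS n c" and st: "ssm_step n c c'"
  shows "goodS n c'"
proof -
  obtain i S where i: "i \<in> {1..n}" "3 \<le> c i" and S: "S \<subseteq> {0, cyc_pred n i, cyc_succ n i}" and
    c': "c' = (\<lambda>j. if j = i then c i - card S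
                  else if j \<in> S - {0} then c j + 1 else c j)"
    using st unfolding ssm_step_def by blast
  obtain ori where le: "\<forall>v\<in>{1..n}. ind n ori v \<le> c v"
    using g unfolding goodS_def by blast
  define p where "p = cyc_pred n i"
  define s where "s = cyc_succ n i"
  define ori' where "ori' = ori(p := (if p \<in> S then False else ori p), i := (if s \<in> S then True else ori i))"
  have pi: "p \<noteq> i" using pred_neq[OF n i(1)] p_def by simp
  have si: "s \<noteq> i" using succ_neq[OF n i(1)] s_def by simp
  have sp: "s \<noteq> p" using succ_neq_pred[OF n i(1)] s_def p_def by simp
  have p0: "p \<noteq> 0" "s \<noteq> 0" using pred_in[OF i(1)] succ_in[OF i(1)] p_def s_def by auto
  have cS: "card S \<le> 1 + (if p \<in> S then 1 else 0) + (if s \<in> S then 1 else 0)"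
    using card_S_le[OF S] p_def s_def by simp
  have "ind n ori' v \<le> c' v" if v: "v \<in> {1..n}" for v
  proof -
    consider "v = i" | "v = s" | "v = p" | "v \<noteq> i \<and> v \<noteq> s \<and> v \<noteq> p" by blast
    then show ?thesis
    proof cases
      case 1 then show ?thesis using ind_upd_i[OF n i(1), of ori "if p \<in> S then False else ori p" "if s \<in> S then True else ori i"] cS i(2) unfolding ori'_def c' p_def s_def
        by (auto split: if_splits)
    next
      case 2
      have "ind n ori s \<le> c s" using le succ_in[OF i(1)] s_def by blast
      show ?thesis
      proof (cases "s \<in> S")
        case True
        have "c' s = c s + 1" using True si p0 unfolding c' by simp
        moreover have "ind n ori' s = 1 + (if ori s then 0 else 1)"
          using ind_upd_s[OF n i(1), of ori "if p \<in> S then False else ori p" "if s \<in> S then True else ori i"] True unfolding ori'_def p_def s_def by simp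
        ultimately show ?thesis using 2 ind_ge1[where n=n and ori=ori and v=s] `ind n ori s \<le> c s` by simp
      next
        case False
        have "c' s = c s" using False si p0 unfolding c' by simp
        moreover have "ind n ori' s = ind n ori s"
          using ind_upd_s[OF n i(1), of ori "if p \<in> S then False else ori p" "if s \<in> S then True else ori i"] ind_s[OF i(1)] False unfolding ori'_def p_def s_def by simp
        ultimately show ?thesis using 2 `ind n ori s \<le> c s` by simp
      qed
    next
      case 3
      have "ind n ori p \<le> c p" using le pred_in[OF i(1)] p_def by blast
      show ?thesis
      proof (cases "p \<in> S")
        case True
        have "c' p = c p + 1" using True pi p0 unfolding c' by simp
        moreover have "ind n ori' p = (if ori (cyc_pred n p) then 1 else 0) + 1"
          using ind_upd_p[OF n i(1), of ori "if p \<in> S then False else ori p" "if s \<in> S then True else ori i"] True unfolding ori'_def p_def s_def by simp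
        ultimately show ?thesis using 3 ind_ge2[where n=n and ori=ori and v=p] `ind n ori p \<le> c p` by simp
      next
        case False
        have "c' p = c p" using False pi p0 unfolding c' by simp
        moreover have "ind n ori' p = ind n ori p"
          using ind_upd_p[OF n i(1), of ori "if p \<in> S then False else ori p" "if s \<in> S then True else ori i"] False unfolding ori'_def p_def s_def
          by (simp add: ind_def[of n ori "cyc_pred n i"])
        ultimately show ?thesis using 3 `ind n ori p \<le> c p` by simp
      qed
    next
      case 4
      have "v \<notin> S - {0}" using S 4 p_def s_def by auto
      then show ?thesis using ind_upd_other[OF n i(1) v, of ori "if p \<in> S then False else ori p" "if s \<in> S then True else ori i"] le v 4
        unfolding ori'_def c' p_def s_def by auto
    qed
  qed
  then show ?thesis unfolding goodS_def by blast
qed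

lemma asm_steps_goodA:
  assumes n: "3 \<le> n" and "(asm_step n)\<^sup>*\<^sup>* c d" "goodA n c"
  shows "goodA n d"
  using assms(2,3) by (induction rule: rtranclp_induct) (auto intro: asm_step_goodA[OF n])

lemma ssm_steps_goodS:
  assumes n: "3 \<le> n" and "(ssm_step n)\<^sup>*\<^sup>* c d" "goodS n c"
  shows "goodS n d"
  using assms(2,3) by (induction rule: rtranclp_induct) (auto intro: ssm_step_goodS[OF n])

lemma asm_trans_goodA:
  assumes n: "3 \<le> n" and t: "asm_trans n c d" and g: "goodA n c"
  shows "goodA n d"
proof -
  obtain i where "(asm_step n)\<^sup>*\<^sup>* (add_grain c i) d" using t unfolding asm_trans_def by blast
  moreover have "goodA n (add_grain c i)" using goodA_mono[OF g] add_grain_ge by blast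
  ultimately show ?thesis using asm_steps_goodA[OF n] by blast
qed

lemma ssm_trans_goodS:
  assumes n: "3 \<le> n" and t: "ssm_trans n c d" and g: "goodS n c"
  shows "goodS n d"
proof -
  obtain i where "(ssm_step n)\<^sup>*\<^sup>* (add_grain c i) d" using t unfolding ssm_trans_def by blast
  moreover have "goodS n (add_grain c i)" using goodS_mono[OF g] add_grain_ge by blast
  ultimately show ?thesis using ssm_steps_goodS[OF n] by blast
qed

lemma asm_transs_goodA:
  assumes n: "3 \<le> n" and "(asm_trans n)\<^sup>*\<^sup>* c d" "goodA n c"
  shows "goodA n d"
  using assms(2,3) by (induction rule: rtranclp_induct) (auto intro: asm_trans_goodA[OF n])

lemma ssm_transs_goodS:
  assumes n: "3 \<le> n" and "(ssm_trans n)\<^sup>*\<^sup>* c d" "goodS n c"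
  shows "goodS n d"
  using assms(2,3) by (induction rule: rtranclp_induct) (auto intro: ssm_trans_goodS[OF n])

lemma stable_upd: "wheel_stable n c \<Longrightarrow> v \<in> {1..n} \<Longrightarrow> x < 3 \<Longrightarrow> wheel_stable n (c(v := x))"
  unfolding wheel_stable_def by auto

lemma stable_le: "wheel_stable n c \<Longrightarrow> v \<in> {1..n} \<Longrightarrow> c v \<le> 2"
  unfolding wheel_stable_def by force

lemma stable_out: "wheel_stable n c \<Longrightarrow> v \<notin> {1..n} \<Longrightarrow> c v = 0"
  unfolding wheel_stable_def by force

lemma asm_stepI:
  assumes "i \<in> {1..n}" "3 \<le> c i"
    "\<And>j. c' j = (if j = i then c i - 3
               else if j = cyc_succ n i \<or> j = cyc_pred n i then c j + 1 else c j)"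
  shows "asm_step n c c'"
  unfolding asm_step_def using assms by (intro bexI[of _ i]) (auto intro!: ext)

lemma asm_transI:
  assumes "wheel_stable n c" "wheel_stable n d" "i \<in> {1..n}" "(asm_step n)\<^sup>*\<^sup>* (add_grain c i) d"
  shows "asm_trans n c d"
  unfolding asm_trans_def using assms by blast

lemma T1:
  assumes "wheel_stable n c" "v \<in> {1..n}" "c v < 2"
  shows "asm_trans n c (add_grain c v)"
proof -
  have "wheel_stable n (add_grain c v)" using assms unfolding add_grain_def
    by (intro stable_upd) auto
  then show ?thesis using assms by (intro asm_transI[of _ _ _ v]) auto
qed

lemma T2:
  assumes n: "3 \<le> n" and st: "wheel_stable n c" and b: "b \<in> {1..n}" and
    cb: "c b = 2" and cp: "c (cyc_pred n b) \<le> 1" and cs: "c (cyc_succ n b) \<le> 1"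
  shows "asm_trans n c (c(b := 0, cyc_pred n b := c (cyc_pred n b) + 1, cyc_succ n b := c (cyc_succ n b) + 1))"
proof -
  let ?p = "cyc_pred n b" and ?s = "cyc_succ n b"
  have d: "?p \<noteq> b" "?s \<noteq> b" "?s \<noteq> ?p" using pred_neq[OF n b] succ_neq[OF n b] succ_neq_pred[OF n b] by auto
  have ps: "?p \<in> {1..n}" "?s \<in> {1..n}" using pred_in[OF b] succ_in[OF b] by auto
  have "asm_step n (add_grain c b) (c(b := 0, ?p := c ?p + 1, ?s := c ?s + 1))"
    by (rule asm_stepI[OF b]) (use cb d in \<open>auto simp: add_grain_def\<close>)
  moreover have "wheel_stable n (c(b := 0, ?p := c ?p + 1, ?s := c ?s + 1))"
    using st b ps cp cs by (intro stable_upd) auto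
  ultimately show ?thesis using st b by (intro asm_transI[of _ _ _ b]) auto
qed

lemma T3:
  assumes n: "4 \<le> n" and st: "wheel_stable n c" and b: "b \<in> {1..n}" and
    cb: "c b = 2" and cp: "c (cyc_pred n b) = 2" and
    cpp: "c (cyc_pred n (cyc_pred n b)) \<le> 1" and cs: "c (cyc_succ n b) \<le> 1"
  shows "asm_trans n c (c(cyc_pred n (cyc_pred n b) := c (cyc_pred n (cyc_pred n b)) + 1,
                          cyc_pred n b := 1, b := 0, cyc_succ n b := c (cyc_succ n b) + 1))"
proof -
  let ?p = "cyc_pred n b" and ?s = "cyc_succ n b" and ?pp = "cyc_pred n (cyc_pred n b)"
  have n3: "3 \<le> n" using n by auto
  have ps: "?p \<in> {1..n}" "?s \<in> {1..n}" "?pp \<in> {1..n}" using pred_in[OF b] succ_in[OF b] pred_in[OF pred_in[OF b]] by auto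
  have d: "?p \<noteq> b" "?s \<noteq> b" "?s \<noteq> ?p" "?pp \<noteq> ?p" "?pp \<noteq> b" "?pp \<noteq> ?s"
    using pred_neq[OF n3 b] succ_neq[OF n3 b] succ_neq_pred[OF n3 b] pred_neq[OF n3 ps(1)]
      pp_neq_s[OF n b] succ_neq_pred[OF n3 ps(1)] b ps by (auto)
  have sp: "cyc_succ n ?p = b" using b by simp
  define X1 where "X1 = c(?p := 0, ?pp := c ?pp + 1, b := 3)"
  have s1: "asm_step n (add_grain c ?p) X1"
    by (rule asm_stepI[OF ps(1)]) (use cp cb d sp in \<open>auto simp: add_grain_def X1_def\<close>)
  have s2: "asm_step n X1 (c(?pp := c ?pp + 1, ?p := 1, b := 0, ?s := c ?s + 1))"
    by (rule asm_stepI[OF b]) (use cp d in \<open>auto simp: X1_def\<close>)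
  have "wheel_stable n (c(?pp := c ?pp + 1, ?p := 1, b := 0, ?s := c ?s + 1))"
    using st b ps cpp cs by (intro stable_upd) auto
  then show ?thesis using st ps s1 s2 by (intro asm_transI[of _ _ _ ?p]) auto
qed

lemma T3':
  assumes n: "4 \<le> n" and st: "wheel_stable n c" and b: "b \<in> {1..n}" and
    cb: "c b = 2" and cs: "c (cyc_succ n b) = 2" and
    cp: "c (cyc_pred n b) \<le> 1" and css: "c (cyc_succ n (cyc_succ n b)) \<le> 1"
  shows "asm_trans n c (c(cyc_pred n b := c (cyc_pred n b) + 1, b := 0, cyc_succ n b := 1,
                          cyc_succ n (cyc_succ n b) := c (cyc_succ n (cyc_succ n b)) + 1))"
proof -
  let ?p = "cyc_pred n b" and ?s = "cyc_succ n b" and ?ss = "cyc_succ n (cyc_succ n b)"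
  have n3: "3 \<le> n" using n by auto
  have ps: "?p \<in> {1..n}" "?s \<in> {1..n}" "?ss \<in> {1..n}" using pred_in[OF b] succ_in[OF b] succ_in[OF succ_in[OF b]] by auto
  have pp: "cyc_pred n (cyc_pred n ?ss) \<noteq> cyc_succ n ?ss" using pp_neq_s[OF n ps(3)] .
  have e1: "cyc_pred n ?ss = ?s" "cyc_pred n ?s = b" using b ps by auto
  have d: "?p \<noteq> b" "?s \<noteq> b" "?s \<noteq> ?p" "?ss \<noteq> ?s" "?ss \<noteq> b" "?ss \<noteq> ?p"
    using pred_neq[OF n3 b] succ_neq[OF n3 b] succ_neq_pred[OF n3 b] succ_neq[OF n3 ps(2)]
      succ_neq_pred[OF n3 ps(2)] pp_neq_s[OF n ps(2)] b ps e1 by (auto)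
  define X1 where "X1 = c(?s := 0, b := 3, ?ss := c ?ss + 1)"
  have s1: "asm_step n (add_grain c ?s) X1"
    by (rule asm_stepI[OF ps(2)]) (use cs cb d e1 in \<open>auto simp: add_grain_def X1_def\<close>)
  have s2: "asm_step n X1 (c(?p := c ?p + 1, b := 0, ?s := 1, ?ss := c ?ss + 1))"
    by (rule asm_stepI[OF b]) (use cs d in \<open>auto simp: X1_def\<close>)
  have "wheel_stable n (c(?p := c ?p + 1, b := 0, ?s := 1, ?ss := c ?ss + 1))"
    using st b ps cp css by (intro stable_upd) auto
  then show ?thesis using st ps s1 s2 by (intro asm_transI[of _ _ _ ?s]) auto
qed

lemma T4:
  assumes n: "n = 3" and st: "wheel_stable n c" and b: "b \<in> {1..n}" and
    cb: "c b = 1" and cs: "c (cyc_succ n b) = 2" and cp: "c (cyc_pred n b) = 2"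
  shows "asm_trans n c (c(b := 0, cyc_succ n b := 1, cyc_pred n b := 2))"
proof -
  let ?p = "cyc_pred n b" and ?s = "cyc_succ n b"
  have n3: "3 \<le> n" using n by auto
  have ps: "?p \<in> {1..n}" "?s \<in> {1..n}" using pred_in[OF b] succ_in[OF b] by auto
  have e: "cyc_pred n ?p = ?s" "cyc_succ n ?s = ?p" "cyc_succ n ?p = b" "cyc_pred n ?s = b"
    using pp_eq_s3[OF n b] b ps by (auto, metis succ_pred ps(1))
  have d: "?p \<noteq> b" "?s \<noteq> b" "?s \<noteq> ?p"
    using pred_neq[OF n3 b] succ_neq[OF n3 b] succ_neq_pred[OF n3 b] by auto
  define X1 where "X1 = c(?p := 0, ?s := 3, b := 2)"
  define X2 where "X2 = c(?p := 1, ?s := 0, b := 3)"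
  have s1: "asm_step n (add_grain c ?p) X1"
    by (rule asm_stepI[OF ps(1)]) (use cp cb cs d e in \<open>auto simp: add_grain_def X1_def\<close>)
  have s2: "asm_step n X1 X2"
    by (rule asm_stepI[OF ps(2)]) (use d e in \<open>auto simp: X1_def X2_def\<close>)
  have s3: "asm_step n X2 (c(b := 0, ?s := 1, ?p := 2))"
    by (rule asm_stepI[OF b]) (use d e in \<open>auto simp: X2_def\<close>)
  have "wheel_stable n (c(b := 0, ?s := 1, ?p := 2))"
    using st b ps by (intro stable_upd) auto
  then show ?thesis using st ps s1 s2 s3 by (intro asm_transI[of _ _ _ ?p]) auto
qed

lemma T4':
  assumes n: "n = 3" and st: "wheel_stable n c" and b: "b \<in> {1..n}" and
    cb: "c b = 1" and cs: "c (cyc_succ n b) = 2" and cp: "c (cyc_pred n b) = 2"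
  shows "asm_trans n c (c(b := 0, cyc_pred n b := 1, cyc_succ n b := 2))"
proof -
  let ?p = "cyc_pred n b" and ?s = "cyc_succ n b"
  have n3: "3 \<le> n" using n by auto
  have ps: "?p \<in> {1..n}" "?s \<in> {1..n}" using pred_in[OF b] succ_in[OF b] by auto
  have e: "cyc_pred n ?p = ?s" "cyc_succ n ?s = ?p" "cyc_succ n ?p = b" "cyc_pred n ?s = b"
    using pp_eq_s3[OF n b] b ps by (auto, metis succ_pred ps(1))
  have d: "?p \<noteq> b" "?s \<noteq> b" "?s \<noteq> ?p"
    using pred_neq[OF n3 b] succ_neq[OF n3 b] succ_neq_pred[OF n3 b] by auto
  define X1 where "X1 = c(?s := 0, ?p := 3, b := 2)"
  define X2 where "X2 = c(?s := 1, ?p := 0, b := 3)"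
  have s1: "asm_step n (add_grain c ?s) X1"
    by (rule asm_stepI[OF ps(2)]) (use cp cb cs d e in \<open>auto simp: add_grain_def X1_def\<close>)
  have s2: "asm_step n X1 X2"
    by (rule asm_stepI[OF ps(1)]) (use d e in \<open>auto simp: X1_def X2_def\<close>)
  have s3: "asm_step n X2 (c(b := 0, ?p := 1, ?s := 2))"
    by (rule asm_stepI[OF b]) (use d e in \<open>auto simp: X2_def\<close>)
  have "wheel_stable n (c(b := 0, ?p := 1, ?s := 2))"
    using st b ps by (intro stable_upd) auto
  then show ?thesis using st ps s1 s2 s3 by (intro asm_transI[of _ _ _ ?s]) auto
qed

definition mm :: "nat \<Rightarrow> nat \<Rightarrow> nat" where
  "mm n = (\<lambda>v. if v \<in> {1..n} then 2 else 0)"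
definition e1 :: "nat \<Rightarrow> nat \<Rightarrow> nat \<Rightarrow> nat" where
  "e1 n i = (\<lambda>v. if v \<in> {1..n} then (if v = i then 2 else 1) else 0)"
definition XX :: "nat \<Rightarrow> nat \<Rightarrow> nat \<Rightarrow> nat" where
  "XX n j = (\<lambda>v. if v \<in> {1..n} then (if v \<le> j then 1 else if v = j+1 then 0 else if v = j+2 then 3
                  else if v = n then 3 else 2) else 0)"
definition YY :: "nat \<Rightarrow> nat \<Rightarrow> nat" where
  "YY n = (\<lambda>v. if v \<in> {1..n} then (if v + 2 \<le> n then 1 else if v + 1 = n then 0 else 4) else 0)"

lemma T5_1:
  assumes n: "3 \<le> n"
  shows "(asm_step n)\<^sup>*\<^sup>* (add_grain (mm n) 1) (e1 n 1)"
proof -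
  have s0: "asm_step n (add_grain (mm n) 1) (XX n 0)"
    by (rule asm_stepI[of 1]) (use n in \<open>auto simp: add_grain_def mm_def XX_def cyc_succ_def cyc_pred_def\<close>)
  have chain: "j + 3 \<le> n \<Longrightarrow> (asm_step n)\<^sup>*\<^sup>* (add_grain (mm n) 1) (XX n j)" for j
  proof (induction j)
    case 0 then show ?case using s0 by auto
  next
    case (Suc j)
    have "asm_step n (XX n j) (XX n (Suc j))"
      by (rule asm_stepI[of "j+2"]) (use Suc.prems in \<open>auto simp: XX_def cyc_succ_def cyc_pred_def\<close>)
    moreover have "(asm_step n)\<^sup>*\<^sup>* (add_grain (mm n) 1) (XX n j)" using Suc.prems by (intro Suc.IH) simp
    ultimately show ?case by (simp add: rtranclp.rtrancl_into_rtrancl)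
  qed
  have "n = Suc (Suc (Suc (n - 3)))" using n by arith
  then obtain m where m: "n = Suc (Suc (Suc m))" by blast
  have "(asm_step n)\<^sup>*\<^sup>* (add_grain (mm n) 1) (XX n m)" using chain m by auto
  moreover have "asm_step n (XX n m) (YY n)"
  proof -
    have xx: "XX n m = (\<lambda>v. if v \<in> {1..n} then (if v \<le> m then 1 else if v = Suc m then 0 else 3) else 0)"
      using m unfolding XX_def by (intro ext) auto
    have sn: "cyc_succ n (Suc (Suc m)) = n" "cyc_pred n (Suc (Suc m)) = Suc m" using m by (auto simp: cyc_succ_def cyc_pred_def)
    show ?thesis unfolding xx
      by (rule asm_stepI[of "Suc (Suc m)"]) (use m sn in \<open>auto simp: YY_def\<close>)
  qed
  moreover have "asm_step n (YY n) (e1 n 1)"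
  proof -
    have sn: "cyc_succ n n = 1" "cyc_pred n n = Suc (Suc m)" using m by (auto simp: cyc_succ_def cyc_pred_def)
    show ?thesis
      by (rule asm_stepI[of "n"]) (use m sn in \<open>auto simp: e1_def YY_def\<close>)
  qed
  ultimately show ?thesis by (meson rtranclp.rtrancl_into_rtrancl)
qed

definition rotc :: "nat \<Rightarrow> (nat \<Rightarrow> nat) \<Rightarrow> nat \<Rightarrow> nat" where
  "rotc n c = (\<lambda>v. if v \<in> {1..n} then c (cyc_pred n v) else 0)"

lemma rot_step:
  assumes n: "3 \<le> n" and st: "asm_step n c c'"
  shows "asm_step n (rotc n c) (rotc n c')"
proof -
  obtain i where i: "i \<in> {1..n}" "3 \<le> c i" and c': "c' = (\<lambda>j. if j = i then c i - 3
               else if j = cyc_succ n i \<or> j = cyc_pred n i then c j + 1 else c j)"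
    using st unfolding asm_step_def by blast
  have si: "cyc_succ n i \<in> {1..n}" using succ_in[OF i(1)] .
  show ?thesis
  proof (rule asm_stepI[OF si])
    show "3 \<le> rotc n c (cyc_succ n i)" using si i unfolding rotc_def by simp
    fix j
    show "rotc n c' j = (if j = cyc_succ n i then rotc n c (cyc_succ n i) - 3
          else if j = cyc_succ n (cyc_succ n i) \<or> j = cyc_pred n (cyc_succ n i) then rotc n c j + 1 else rotc n c j)"
    proof (cases "j \<in> {1..n}")
      case True
      have e1: "(cyc_pred n j = i) = (j = cyc_succ n i)" using True i(1) succ_eq_iff by metis
      have e2: "(cyc_pred n j = cyc_succ n i) = (j = cyc_succ n (cyc_succ n i))"
        using True si succ_eq_iff by metis
      have e3: "(cyc_pred n j = cyc_pred n i) = (j = i)"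
        using True i(1) by (metis succ_pred)
      show ?thesis using True i si e1 e2 e3 unfolding rotc_def c' by auto
    next
      case False
      then show ?thesis using si succ_in[OF si] i(1) unfolding rotc_def c' by auto
    qed
  qed
qed

lemma rot_steps:
  assumes n: "3 \<le> n" and "(asm_step n)\<^sup>*\<^sup>* c c'"
  shows "(asm_step n)\<^sup>*\<^sup>* (rotc n c) (rotc n c')"
  using assms(2) by (induction rule: rtranclp_induct) (auto intro: rot_step[OF n] rtranclp.rtrancl_into_rtrancl)

lemma rot_add_mm: "i \<in> {1..n} \<Longrightarrow> rotc n (add_grain (mm n) i) = add_grain (mm n) (cyc_succ n i)"
proof (rule ext)
  fix v assume i: "i \<in> {1..n}"
  show "rotc n (add_grain (mm n) i) v = add_grain (mm n) (cyc_succ n i) v"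
  proof (cases "v \<in> {1..n}")
    case True
    have "cyc_pred n v \<in> {1..n}" using pred_in[OF True] .
    moreover have "(cyc_pred n v = i) = (v = cyc_succ n i)" using True i succ_eq_iff by metis
    ultimately show ?thesis using True unfolding rotc_def add_grain_def mm_def by auto
  next
    case False
    then have "v \<noteq> cyc_succ n i" using succ_in[OF i] by auto
    then show ?thesis using False unfolding rotc_def add_grain_def mm_def by auto
  qed
qed

lemma rot_e1: "i \<in> {1..n} \<Longrightarrow> rotc n (e1 n i) = e1 n (cyc_succ n i)"
proof (rule ext)
  fix v assume i: "i \<in> {1..n}"
  show "rotc n (e1 n i) v = e1 n (cyc_succ n i) v"
  proof (cases "v \<in> {1..n}")
    case True
    have "cyc_pred n v \<in> {1..n}" using pred_in[OF True] .
    moreover have "(cyc_pred n v = i) = (v = cyc_succ n i)" using True i succ_eq_iff by metis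
    ultimately show ?thesis using True unfolding rotc_def e1_def by auto
  next
    case False
    then show ?thesis unfolding rotc_def e1_def by auto
  qed
qed

lemma T5:
  assumes n: "3 \<le> n" and i: "i \<in> {1..n}"
  shows "(asm_step n)\<^sup>*\<^sup>* (add_grain (mm n) i) (e1 n i)"
  using i
proof (induction i)
  case 0 then show ?case by auto
next
  case (Suc i)
  show ?case
  proof (cases "i = 0")
    case True then show ?thesis using T5_1[OF n] by simp
  next
    case False
    then have ii: "i \<in> {1..n}" "i \<noteq> n" using Suc.prems by auto
    have "cyc_succ n i = Suc i" using ii unfolding cyc_succ_def by simp
    then show ?thesis using rot_steps[OF n Suc.IH[OF ii(1)]] rot_add_mm[OF ii(1)] rot_e1[OF ii(1)] by simp
  qed
qed

lemma mm_stable: "wheel_stable n (mm n)" unfolding wheel_stable_def mm_def by auto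
lemma e1_stable: "wheel_stable n (e1 n i)" unfolding wheel_stable_def e1_def by auto

lemma trans_mm_e1: "3 \<le> n \<Longrightarrow> i \<in> {1..n} \<Longrightarrow> asm_trans n (mm n) (e1 n i)"
  using T5 mm_stable e1_stable by (intro asm_transI) auto

lemma sum_Suc_lemma:
  assumes "finite A" "v \<in> A" "f v = Suc (g v)" "\<forall>u\<in>A-{v}. f u = g u"
  shows "sum f A = Suc (sum g A)"
proof -
  have "sum f A = f v + sum f (A - {v})" using assms by (simp add: sum.remove)
  moreover have "sum g A = g v + sum g (A - {v})" using assms by (simp add: sum.remove)
  moreover have "sum f (A - {v}) = sum g (A - {v})" using assms by (intro sum.cong) auto
  ultimately show ?thesis using assms by simp
qed

lemma UC_aux:
  "(\<Sum>v\<in>{1..n}. c' v - c v) = k \<Longrightarrow> (asm_trans n)\<^sup>*\<^sup>* x c \<Longrightarrow> wheel_stable n c \<Longrightarrow>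
   wheel_stable n c' \<Longrightarrow> \<forall>v\<in>{1..n}. c v \<le> c' v \<Longrightarrow> (asm_trans n)\<^sup>*\<^sup>* x c'"
proof (induction k arbitrary: c)
  case 0
  then have z: "\<forall>v\<in>{1..n}. c' v - c v = 0" by (simp add: sum_eq_0_iff)
  have "\<forall>v\<in>{1..n}. c' v = c v" using z 0(5) by (meson diff_is_0_eq le_antisym)
  then have "c' = c" using 0(3) 0(4) unfolding wheel_stable_def by (intro ext) metis
  then show ?case using 0 by simp
next
  case (Suc k)
  then obtain v where v: "v \<in> {1..n}" "c v < c' v"
    by (metis (no_types, lifting) diff_is_0_eq' leI sum_eq_0_iff finite_atLeastAtMost nat.simps(3))
  have lt: "c v < 2" using v stable_le[OF Suc.prems(4) v(1)] by simp
  have t: "asm_trans n c (add_grain c v)" using T1[OF Suc.prems(3) v(1) lt] .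
  have "(\<Sum>v\<in>{1..n}. c' v - c v) = Suc (\<Sum>u\<in>{1..n}. c' u - add_grain c v u)"
    by (rule sum_Suc_lemma) (use v in \<open>auto simp: add_grain_def\<close>)
  then have a1: "(\<Sum>u\<in>{1..n}. c' u - add_grain c v u) = k" using Suc.prems by simp
  have a2: "wheel_stable n (add_grain c v)" using t unfolding asm_trans_def by blast
  have a3: "\<forall>u\<in>{1..n}. add_grain c v u \<le> c' u" using Suc.prems(5) v unfolding add_grain_def by auto
  have a4: "(asm_trans n)\<^sup>*\<^sup>* x (add_grain c v)" using Suc.prems(2) t by simp
  show ?case by (rule Suc.IH[OF a1 a4 a2 Suc.prems(4) a3])
qed

lemma UC:
  assumes "(asm_trans n)\<^sup>*\<^sup>* x c" "wheel_stable n c" "wheel_stable n c'" "\<forall>v\<in>{1..n}. c v \<le> c' v"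
  shows "(asm_trans n)\<^sup>*\<^sup>* x c'"
  using UC_aux[OF refl assms] .

lemma to_mm:
  assumes "wheel_stable n c"
  shows "(asm_trans n)\<^sup>*\<^sup>* c (mm n)"
  using UC[of n c c "mm n"] assms mm_stable stable_le[OF assms] unfolding mm_def by auto

lemma asm_ssm_step:
  assumes n: "3 \<le> n" and st: "asm_step n c c'"
  shows "ssm_step n c c'"
proof -
  obtain i where i: "i \<in> {1..n}" "3 \<le> c i" and c': "c' = (\<lambda>j. if j = i then c i - 3
               else if j = cyc_succ n i \<or> j = cyc_pred n i then c j + 1 else c j)"
    using st unfolding asm_step_def by blast
  have pos: "cyc_pred n i \<noteq> 0" "cyc_succ n i \<noteq> 0" "cyc_pred n i \<noteq> cyc_succ n i"
    using pred_in[OF i(1)] succ_in[OF i(1)] succ_neq_pred[OF n i(1)] by auto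
  have cS: "card {0, cyc_pred n i, cyc_succ n i} = 3" using pos by (simp add: card_insert_if)
  have mem: "\<And>j. (j \<in> {0, cyc_pred n i, cyc_succ n i} - {0}) = (j = cyc_succ n i \<or> j = cyc_pred n i)"
    using pos by auto
  have e: "c' = (\<lambda>j. if j = i then c i - card {0, cyc_pred n i, cyc_succ n i}
                  else if j \<in> {0, cyc_pred n i, cyc_succ n i} - {0} then c j + 1 else c j)"
    unfolding c' cS mem by (rule refl)
  show ?thesis unfolding ssm_step_def
    by (rule bexI[OF _ i(1)], rule conjI[OF i(2)], rule exI[of _ "{0, cyc_pred n i, cyc_succ n i}"]) (use e in simp)
qed

lemma asm_ssm_trans:
  assumes n: "3 \<le> n" and "asm_trans n c d"
  shows "ssm_trans n c d"
proof -
  obtain i where i: "i \<in> {1..n}" and st: "(asm_step n)\<^sup>*\<^sup>* (add_grain c i) d" using assms unfolding asm_trans_def by blast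
  from st have "(ssm_step n)\<^sup>*\<^sup>* (add_grain c i) d"
  proof (induction rule: rtranclp_induct)
    case base then show ?case by simp
  next
    case (step y z) then show ?case using asm_ssm_step[OF n step.hyps(2)] by simp
  qed
  with i show ?thesis using assms unfolding asm_trans_def ssm_trans_def by blast
qed

lemma asm_ssm_transs:
  assumes n: "3 \<le> n" and "(asm_trans n)\<^sup>*\<^sup>* c d"
  shows "(ssm_trans n)\<^sup>*\<^sup>* c d"
  using assms(2)
proof (induction rule: rtranclp_induct)
  case base then show ?case by simp
next
  case (step y z) then show ?case using asm_ssm_trans[OF n step.hyps(2)] by simp
qed

definition ones :: "nat \<Rightarrow> nat \<Rightarrow> nat" where
  "ones n = (\<lambda>v. if v \<in> {1..n} then 1 else 0)"
definition zt :: "nat \<Rightarrow> nat \<Rightarrow> nat \<Rightarrow> nat" where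
  "zt n b = (\<lambda>v. if v \<in> {1..n} then (if v = b then 0 else if v = cyc_succ n b then 2 else 1) else 0)"

lemma T6:
  assumes n: "3 \<le> n" and b: "b \<in> {1..n}"
  shows "ssm_trans n (zt n b) (ones n)"
proof -
  let ?s = "cyc_succ n b"
  have s: "?s \<in> {1..n}" using succ_in[OF b] .
  have d: "?s \<noteq> b" using succ_neq[OF n b] .
  have cS: "card {0, b} = 2" using b by auto
  have "ssm_step n (add_grain (zt n b) ?s) (ones n)"
    unfolding ssm_step_def
  proof (intro bexI[OF _ s] conjI exI[of _ "{0, b}"])
    show "3 \<le> add_grain (zt n b) ?s ?s" using s d unfolding add_grain_def zt_def by simp
    show "{0, b} \<subseteq> {0, cyc_pred n ?s, cyc_succ n ?s}" using b by simp
    show "ones n = (\<lambda>j. if j = ?s then add_grain (zt n b) ?s ?s - card {0, b}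
             else if j \<in> {0, b} - {0} then add_grain (zt n b) ?s j + 1 else add_grain (zt n b) ?s j)"
      using cS s d b unfolding ones_def add_grain_def zt_def by (intro ext) auto
  qed
  moreover have "wheel_stable n (zt n b)" "wheel_stable n (ones n)"
    unfolding wheel_stable_def zt_def ones_def by auto
  ultimately show ?thesis unfolding ssm_trans_def using s by blast
qed

lemma zt_goodA:
  assumes n: "3 \<le> n" and b: "b \<in> {1..n}"
  shows "goodA n (zt n b)"
proof -
  let ?s = "cyc_succ n b"
  define ori where "ori = (\<lambda>k. k = b)"
  have "cyc_acyclic n ori"
    using acyclic_if[OF n b, of ori ?s] succ_in[OF b] succ_neq[OF n b] unfolding ori_def by auto
  moreover have "ind n ori v \<le> zt n b v" if v: "v \<in> {1..n}" for v
  proof -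
    have "(cyc_pred n v = b) = (v = ?s)" using v b succ_eq_iff by metis
    then show ?thesis using v pred_neq[OF n b] succ_neq[OF n b] unfolding ind_def ori_def zt_def by auto
  qed
  ultimately show ?thesis unfolding goodA_def by blast
qed

lemma mm_goodA:
  assumes n: "3 \<le> n"
  shows "goodA n (mm n)"
proof -
  obtain ori where "cyc_acyclic n ori" using zt_goodA[OF n, of 1] n unfolding goodA_def by auto
  moreover have "\<forall>v\<in>{1..n}. ind n ori v \<le> mm n v" using ind_le2 unfolding mm_def by auto
  ultimately show ?thesis unfolding goodA_def by blast
qed

definition SI :: "nat \<Rightarrow> (nat \<Rightarrow> nat) \<Rightarrow> int" where
  "SI n c = (\<Sum>v\<in>{1..n}. int (c v))"
definition ZZ :: "nat \<Rightarrow> (nat \<Rightarrow> nat) \<Rightarrow> nat" where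
  "ZZ n c = card {v\<in>{1..n}. c v = 0}"
definition mu :: "nat \<Rightarrow> (nat \<Rightarrow> nat) \<Rightarrow> nat" where
  "mu n c = nat (2 * int n - SI n c) * (n + 1) + ZZ n c"

lemma SI_upd: "a \<in> {1..n} \<Longrightarrow> SI n (c(a := x)) = SI n c + int x - int (c a)"
proof -
  assume a: "a \<in> {1..n}"
  have "SI n (c(a := x)) = int x + (\<Sum>v\<in>{1..n} - {a}. int ((c(a := x)) v))"
    unfolding SI_def using a by (simp add: sum.remove)
  moreover have "(\<Sum>v\<in>{1..n} - {a}. int ((c(a := x)) v)) = (\<Sum>v\<in>{1..n} - {a}. int (c v))"
    by (rule sum.cong) auto
  moreover have "SI n c = int (c a) + (\<Sum>v\<in>{1..n} - {a}. int (c v))"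
    unfolding SI_def using a by (simp add: sum.remove)
  ultimately show ?thesis by simp
qed

lemma SI_le: "wheel_stable n c \<Longrightarrow> SI n c \<le> 2 * int n"
proof -
  assume st: "wheel_stable n c"
  have "SI n c \<le> (\<Sum>v\<in>{1..n}. (2::int))" unfolding SI_def
    by (rule sum_mono) (use stable_le[OF st] in force)
  then show ?thesis by simp
qed

lemma ZZ_le: "ZZ n c \<le> n"
proof -
  have "ZZ n c \<le> card {1..n}" unfolding ZZ_def by (rule card_mono) auto
  then show ?thesis by simp
qed

lemma mu_less1:
  assumes st: "wheel_stable n c'" and lt: "SI n c < SI n c'"
  shows "mu n c' < mu n c"
proof -
  define A where "A = nat (2 * int n - SI n c')"
  define B where "B = nat (2 * int n - SI n c)"
  have "A + 1 \<le> B" using SI_le[OF st] lt unfolding A_def B_def by linarith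
  then have "(A + 1) * (n + 1) \<le> B * (n + 1)" by (rule mult_le_mono1)
  moreover have "A * (n + 1) + ZZ n c' < (A + 1) * (n + 1)" using ZZ_le[of n c'] by simp
  ultimately show ?thesis unfolding mu_def A_def[symmetric] B_def[symmetric] by linarith
qed

lemma mu_less2:
  assumes "SI n c' = SI n c" "ZZ n c' < ZZ n c"
  shows "mu n c' < mu n c"
  using assms unfolding mu_def by simp

lemma pred_eq_iff: "v \<in> {1..n} \<Longrightarrow> x \<in> {1..n} \<Longrightarrow> (cyc_pred n v = x) = (v = cyc_succ n x)"
  using succ_eq_iff by metis

lemma ss_neq_p: "4 \<le> n \<Longrightarrow> v \<in> {1..n} \<Longrightarrow> cyc_succ n (cyc_succ n v) \<noteq> cyc_pred n v"
  unfolding cyc_succ_def cyc_pred_def by auto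

lemma ind_same: "ori' v = ori v \<Longrightarrow> ori' (cyc_pred n v) = ori (cyc_pred n v) \<Longrightarrow> ind n ori' v = ind n ori v"
  unfolding ind_def by simp

lemma trans_stable: "(asm_trans n)\<^sup>*\<^sup>* c d \<Longrightarrow> wheel_stable n c \<Longrightarrow> wheel_stable n d"
  by (induction rule: rtranclp_induct) (auto simp: asm_trans_def)

lemma strans_stable: "(ssm_trans n)\<^sup>*\<^sup>* c d \<Longrightarrow> wheel_stable n c \<Longrightarrow> wheel_stable n d"
  by (induction rule: rtranclp_induct) (auto simp: ssm_trans_def)

lemma zero_facts:
  assumes "b \<in> {1..n}" "ind n ori b \<le> 0"
  shows "\<not> ori (cyc_pred n b)" "ori b"
  using assms unfolding ind_def by (auto split: if_splits)

lemma caseC: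
  assumes n: "3 \<le> n" and st: "wheel_stable n c" and b: "b \<in> {1..n}" and cb: "c b = 0"
    and cp: "c (cyc_pred n b) = 2" and cs: "c (cyc_succ n b) = 2"
    and le: "\<forall>v\<in>{1..n}. ind n ori v \<le> c v"
  shows "\<exists>c'. wheel_stable n c' \<and> goodA n c' \<and> mu n c' < mu n c \<and> asm_trans n c' c"
proof -
  define p where "p = cyc_pred n b"
  define s where "s = cyc_succ n b"
  have ps: "p \<in> {1..n}" "s \<in> {1..n}" using pred_in[OF b] succ_in[OF b] p_def s_def by auto
  have d: "p \<noteq> b" "s \<noteq> b" "s \<noteq> p" using pred_neq[OF n b] succ_neq[OF n b] succ_neq_pred[OF n b]
    p_def s_def by auto
  have ib: "ind n ori b \<le> 0" using le b cb by force
  have zf: "\<not> ori p" "ori b" using zero_facts[OF b ib] p_def by auto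
  define c' where "c' = c(b := 2, p := 1, s := 1)"
  have st': "wheel_stable n c'" unfolding c'_def using st b ps by (intro stable_upd) auto
  define ori' where "ori' = ori(p := True, b := False)"
  have pp1: "cyc_pred n p \<noteq> p" using pred_neq[OF n ps(1)] .
  have pp2: "cyc_pred n p \<noteq> b"
  proof
    assume "cyc_pred n p = b"
    then have "p = s" using pred_eq_iff[OF ps(1) b] s_def by simp
    then show False using d by simp
  qed
  note pp = pp1 pp2
  have "ind n ori' v \<le> c' v" if v: "v \<in> {1..n}" for v
  proof -
    consider "v = b" | "v = p" | "v = s" | "v \<noteq> b \<and> v \<noteq> p \<and> v \<noteq> s" by blast
    then show ?thesis
    proof cases
      case 1 then show ?thesis unfolding ind_def ori'_def c'_def using d p_def by auto
    next
      case 2 then show ?thesis unfolding ind_def ori'_def c'_def using d pp by auto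
    next
      case 3
      have "cyc_pred n s = b" using s_def b by simp
      then show ?thesis using 3 unfolding ind_def ori'_def c'_def using d by auto
    next
      case 4
      have "cyc_pred n v \<noteq> p" using pred_eq_iff[OF v ps(1)] 4 p_def b by auto
      moreover have "cyc_pred n v \<noteq> b" using pred_eq_iff[OF v b] 4 s_def by auto
      ultimately have "ind n ori' v = ind n ori v" using 4 unfolding ori'_def by (intro ind_same) auto
      moreover have "c' v = c v" using 4 unfolding c'_def by auto
      ultimately show ?thesis using le v by auto
    qed
  qed
  moreover have "cyc_acyclic n ori'" using acyclic_if[OF n ps(1) _ b, of ori'] d unfolding ori'_def by auto
  ultimately have g: "goodA n c'" unfolding goodA_def by blast
  have "SI n c' = SI n c" unfolding c'_def using b ps d cb cp cs p_def s_def by (simp add: SI_upd)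
  moreover have "ZZ n c' < ZZ n c"
  proof -
    have "{v\<in>{1..n}. c' v = 0} \<subseteq> {v\<in>{1..n}. c v = 0} - {b}" unfolding c'_def by auto
    moreover have "b \<in> {v\<in>{1..n}. c v = 0}" using b cb by auto
    ultimately have "{v\<in>{1..n}. c' v = 0} \<subset> {v\<in>{1..n}. c v = 0}" by blast
    then show ?thesis unfolding ZZ_def by (rule psubset_card_mono[rotated]) auto
  qed
  ultimately have m: "mu n c' < mu n c" by (rule mu_less2)
  have "asm_trans n c' (c'(b := 0, p := c' p + 1, s := c' s + 1))"
    using T2[OF n st' b] d unfolding c'_def p_def s_def by auto
  moreover have "c'(b := 0, p := c' p + 1, s := c' s + 1) = c"
    unfolding c'_def using d cb cp cs p_def s_def by (intro ext) auto
  ultimately show ?thesis using st' g m by auto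
qed

lemma caseA4:
  assumes n4: "4 \<le> n" and st: "wheel_stable n c" and b: "b \<in> {1..n}" and cb: "c b = 0"
    and cp: "c (cyc_pred n b) = 1"
    and le: "\<forall>v\<in>{1..n}. ind n ori v \<le> c v"
  shows "\<exists>c'. wheel_stable n c' \<and> goodA n c' \<and> mu n c' < mu n c \<and> asm_trans n c' c"
proof -
  have n: "3 \<le> n" using n4 by simp
  define p where "p = cyc_pred n b"
  define s where "s = cyc_succ n b"
  define pp where "pp = cyc_pred n p"
  define ppp where "ppp = cyc_pred n pp"
  have ps: "p \<in> {1..n}" "s \<in> {1..n}" "pp \<in> {1..n}" "ppp \<in> {1..n}"
    using pred_in[OF b] succ_in[OF b] pred_in[OF pred_in[OF b]] pred_in[OF pred_in[OF pred_in[OF b]]]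
    p_def s_def pp_def ppp_def by auto
  have d: "p \<noteq> b" "s \<noteq> b" "s \<noteq> p" using pred_neq[OF n b] succ_neq[OF n b] succ_neq_pred[OF n b]
    p_def s_def by auto
  have d2: "pp \<noteq> p" using pred_neq[OF n ps(1)] pp_def by simp
  have d3: "pp \<noteq> b"
  proof
    assume "pp = b"
    then have "p = s" using pred_eq_iff[OF ps(1) b] s_def pp_def by simp
    then show False using d by simp
  qed
  have d4: "pp \<noteq> s" using pp_neq_s[OF n4 b] pp_def p_def s_def by simp
  have d5: "ppp \<noteq> pp" using pred_neq[OF n ps(3)] ppp_def by simp
  have d6: "ppp \<noteq> p"
  proof
    assume "ppp = p"
    then have "pp = b" using pred_eq_iff[OF ps(3) ps(1)] ppp_def p_def b by simp
    then show False using d3 by simp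
  qed
  have d7: "ppp \<noteq> b"
  proof
    assume "ppp = b"
    then have "pp = s" using pred_eq_iff[OF ps(3) b] ppp_def s_def by simp
    then show False using d4 by simp
  qed
  have ib: "ind n ori b \<le> 0" using le b cb by force
  have zf: "\<not> ori p" "ori b" using zero_facts[OF b ib] p_def by auto
  have ip: "ind n ori p \<le> 1" using le ps cp p_def by force
  then have npp: "\<not> ori pp" using zf unfolding ind_def pp_def by (auto split: if_splits)
  have ipp: "ind n ori pp = (if ori ppp then 1 else 0) + 1" using npp unfolding ind_def ppp_def by simp
  have cpp: "1 \<le> c pp" using le ps(3) ipp by (metis (no_types, lifting) add_leE le_add2 order_trans)
  have sb: "cyc_pred n s = b" using s_def b by simp
  have is': "ind n ori s = 1 + (if ori s then 0 else 1)" using zf sb unfolding ind_def by simp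
  have cs: "1 \<le> c s" using le ps(2) is' by (metis (no_types, lifting) le_add1 order_trans)
  define c' where "c' = c(pp := c pp - 1, p := 2, b := 2, s := c s - 1)"
  have st': "wheel_stable n c'" unfolding c'_def using st b ps stable_le[OF st ps(3)] stable_le[OF st ps(2)] by (intro stable_upd) auto
  define ori' where "ori' = ori(pp := True, p := True, b := False)"
  have "ind n ori' v \<le> c' v" if v: "v \<in> {1..n}" for v
  proof -
    consider "v = pp" | "v = p" | "v = b" | "v = s" | "v \<noteq> pp \<and> v \<noteq> p \<and> v \<noteq> b \<and> v \<noteq> s" by blast
    then show ?thesis
    proof cases
      case 1
      have "ind n ori' pp = (if ori ppp then 1 else 0)" unfolding ind_def ori'_def ppp_def[symmetric]
        using d d2 d3 d5 d6 d7 by simp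
      moreover have "c' pp = c pp - 1" unfolding c'_def using d d2 d3 d4 by simp
      ultimately show ?thesis using 1 le ps(3) ipp by force
    next
      case 2
      have "ind n ori' p = 1" unfolding ind_def ori'_def pp_def[symmetric] using d d2 d3 by simp
      moreover have "c' p = 2" unfolding c'_def using d by simp
      ultimately show ?thesis using 2 by simp
    next
      case 3
      have "ind n ori' b = 2" unfolding ind_def ori'_def p_def[symmetric] using d d3 by simp
      moreover have "c' b = 2" unfolding c'_def using d by simp
      ultimately show ?thesis using 3 by simp
    next
      case 4
      have "ind n ori' s = (if ori s then 0 else 1)" unfolding ind_def ori'_def sb using d d4 by simp
      moreover have "c' s = c s - 1" unfolding c'_def using d by simp
      ultimately show ?thesis using 4 le ps(2) is' by force
    next
      case 5
      have "cyc_pred n v \<noteq> pp" using pred_eq_iff[OF v ps(3)] 5 pp_def ps(1) by auto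
      moreover have "cyc_pred n v \<noteq> p" using pred_eq_iff[OF v ps(1)] 5 p_def b by auto
      moreover have "cyc_pred n v \<noteq> b" using pred_eq_iff[OF v b] 5 s_def by auto
      ultimately have "ind n ori' v = ind n ori v" using 5 unfolding ori'_def by (intro ind_same) auto
      moreover have "c' v = c v" using 5 unfolding c'_def by auto
      ultimately show ?thesis using le v by auto
    qed
  qed
  moreover have "cyc_acyclic n ori'" using acyclic_if[OF n ps(1) _ b, of ori'] d unfolding ori'_def by auto
  ultimately have g: "goodA n c'" unfolding goodA_def by blast
  have "SI n c' = SI n c + 1" unfolding c'_def using b ps d d2 d3 d4 cb cp cpp cs p_def
    by (simp add: SI_upd)
  then have m: "mu n c' < mu n c" using mu_less1[OF st'] by simp
  have "asm_trans n c' (c'(pp := c' pp + 1, p := 1, b := 0, s := c' s + 1))"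
    using T3[OF n4 st' b] d d2 d3 d4 stable_le[OF st ps(3)] stable_le[OF st ps(2)]
    unfolding c'_def p_def s_def pp_def by auto
  moreover have "c'(pp := c' pp + 1, p := 1, b := 0, s := c' s + 1) = c"
    unfolding c'_def using d d2 d3 d4 cb cp cpp cs p_def by (intro ext) auto
  ultimately show ?thesis using st' g m by auto
qed

lemma caseB4:
  assumes n4: "4 \<le> n" and st: "wheel_stable n c" and b: "b \<in> {1..n}" and cb: "c b = 0"
    and cs: "c (cyc_succ n b) = 1"
    and le: "\<forall>v\<in>{1..n}. ind n ori v \<le> c v"
  shows "\<exists>c'. wheel_stable n c' \<and> goodA n c' \<and> mu n c' < mu n c \<and> asm_trans n c' c"
proof -
  have n: "3 \<le> n" using n4 by simp
  define p where "p = cyc_pred n b"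
  define s where "s = cyc_succ n b"
  define ss where "ss = cyc_succ n s"
  define pp where "pp = cyc_pred n p"
  have ps: "p \<in> {1..n}" "s \<in> {1..n}" "ss \<in> {1..n}" "pp \<in> {1..n}"
    using pred_in[OF b] succ_in[OF b] succ_in[OF succ_in[OF b]] pred_in[OF pred_in[OF b]]
    p_def s_def ss_def pp_def by auto
  have d: "p \<noteq> b" "s \<noteq> b" "s \<noteq> p" using pred_neq[OF n b] succ_neq[OF n b] succ_neq_pred[OF n b]
    p_def s_def by auto
  have d2: "ss \<noteq> s" using succ_neq[OF n ps(2)] ss_def by simp
  have d3: "ss \<noteq> b"
  proof
    assume "ss = b"
    then have "s = p" using succ_eq_iff[OF ps(2) b] ss_def p_def by simp
    then show False using d by simp
  qed
  have d4: "ss \<noteq> p" using ss_neq_p[OF n4 b] ss_def p_def s_def by simp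
  have d5: "pp \<noteq> p" using pred_neq[OF n ps(1)] pp_def by simp
  have d6: "pp \<noteq> b"
  proof
    assume "pp = b"
    then have "p = s" using pred_eq_iff[OF ps(1) b] s_def pp_def by simp
    then show False using d by simp
  qed
  have d7: "pp \<noteq> s" using pp_neq_s[OF n4 b] pp_def p_def s_def by simp
  have ib: "ind n ori b \<le> 0" using le b cb by force
  have zf: "\<not> ori p" "ori b" using zero_facts[OF b ib] p_def by auto
  have sb: "cyc_pred n s = b" using s_def b by simp
  have sss: "cyc_pred n ss = s" using ss_def ps by simp
  have is1: "ind n ori s \<le> 1" using le ps cs s_def by force
  then have os: "ori s" using zf sb unfolding ind_def by (auto split: if_splits)
  have iss: "ind n ori ss = 1 + (if ori ss then 0 else 1)" using os sss unfolding ind_def by simp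
  have css: "1 \<le> c ss" using le ps(3) iss by (metis (no_types, lifting) le_add1 order_trans)
  have ip: "ind n ori p = (if ori pp then 1 else 0) + 1" using zf unfolding ind_def pp_def by simp
  have cp: "1 \<le> c p" using le ps(1) ip by (metis (no_types, lifting) le_add2 order_trans)
  define c' where "c' = c(p := c p - 1, b := 2, s := 2, ss := c ss - 1)"
  have st': "wheel_stable n c'" unfolding c'_def using st b ps stable_le[OF st ps(1)] stable_le[OF st ps(3)] by (intro stable_upd) auto
  define ori' where "ori' = ori(p := True, b := False, s := False)"
  have "ind n ori' v \<le> c' v" if v: "v \<in> {1..n}" for v
  proof -
    consider "v = p" | "v = b" | "v = s" | "v = ss" | "v \<noteq> p \<and> v \<noteq> b \<and> v \<noteq> s \<and> v \<noteq> ss" by blast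
    then show ?thesis
    proof cases
      case 1
      have "ind n ori' p = (if ori pp then 1 else 0)" unfolding ind_def ori'_def pp_def[symmetric]
        using d d5 d6 d7 by simp
      moreover have "c' p = c p - 1" unfolding c'_def using d d2 d3 d4 by simp
      ultimately show ?thesis using 1 le ps(1) ip by force
    next
      case 2
      have "ind n ori' b = 2" unfolding ind_def ori'_def p_def[symmetric] using d by simp
      moreover have "c' b = 2" unfolding c'_def using d d3 by simp
      ultimately show ?thesis using 2 by simp
    next
      case 3
      have "ind n ori' s = 1" unfolding ind_def ori'_def sb using d by simp
      moreover have "c' s = 2" unfolding c'_def using d d2 by simp
      ultimately show ?thesis using 3 by simp
    next
      case 4
      have "ind n ori' ss = (if ori ss then 0 else 1)" unfolding ind_def ori'_def sss using d2 d3 d4 by simp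
      moreover have "c' ss = c ss - 1" unfolding c'_def by simp
      ultimately show ?thesis using 4 le ps(3) iss by force
    next
      case 5
      have "cyc_pred n v \<noteq> p" using pred_eq_iff[OF v ps(1)] 5 p_def b by auto
      moreover have "cyc_pred n v \<noteq> b" using pred_eq_iff[OF v b] 5 s_def by auto
      moreover have "cyc_pred n v \<noteq> s" using pred_eq_iff[OF v ps(2)] 5 ss_def by auto
      ultimately have "ind n ori' v = ind n ori v" using 5 unfolding ori'_def by (intro ind_same) auto
      moreover have "c' v = c v" using 5 unfolding c'_def by auto
      ultimately show ?thesis using le v by auto
    qed
  qed
  moreover have "cyc_acyclic n ori'" using acyclic_if[OF n ps(1) _ b, of ori'] d unfolding ori'_def by auto
  ultimately have g: "goodA n c'" unfolding goodA_def by blast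
  have "SI n c' = SI n c + 1" unfolding c'_def using b ps d d2 d3 d4 cb cp css cs s_def
    by (simp add: SI_upd)
  then have m: "mu n c' < mu n c" using mu_less1[OF st'] by simp
  have "asm_trans n c' (c'(p := c' p + 1, b := 0, s := 1, ss := c' ss + 1))"
    using T3'[OF n4 st' b] d d2 d3 d4 stable_le[OF st ps(1)] stable_le[OF st ps(3)]
    unfolding c'_def p_def s_def ss_def by auto
  moreover have "c'(p := c' p + 1, b := 0, s := 1, ss := c' ss + 1) = c"
    unfolding c'_def using d d2 d3 d4 cb cp css cs s_def by (intro ext) auto
  ultimately show ?thesis using st' g m by auto
qed

lemma caseA3:
  assumes n: "n = 3" and st: "wheel_stable n c" and b: "b \<in> {1..n}" and cb: "c b = 0"
    and cp: "c (cyc_pred n b) = 1" and le: "\<forall>v\<in>{1..n}. ind n ori v \<le> c v"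
    and ac: "cyc_acyclic n ori"
  shows "\<exists>c'. wheel_stable n c' \<and> goodA n c' \<and> mu n c' < mu n c \<and> asm_trans n c' c"
proof -
  have n3: "3 \<le> n" using n by simp
  define p where "p = cyc_pred n b"
  define s where "s = cyc_succ n b"
  have ps: "p \<in> {1..n}" "s \<in> {1..n}" using pred_in[OF b] succ_in[OF b] p_def s_def by auto
  have d: "p \<noteq> b" "s \<noteq> b" "s \<noteq> p" using pred_neq[OF n3 b] succ_neq[OF n3 b] succ_neq_pred[OF n3 b]
    p_def s_def by auto
  have pp: "cyc_pred n p = s" using pp_eq_s3[OF n b] p_def s_def by simp
  have sb: "cyc_pred n s = b" using s_def b by simp
  have ib: "ind n ori b \<le> 0" using le b cb by force
  have zf: "\<not> ori p" "ori b" using zero_facts[OF b ib] p_def by auto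
  have ip: "ind n ori p \<le> 1" using le ps cp p_def by force
  then have ns: "\<not> ori s" using zf pp unfolding ind_def by (auto split: if_splits)
  have "ind n ori s = 2" using zf ns sb unfolding ind_def by simp
  then have cs: "c s = 2" using le ps(2) stable_le[OF st ps(2)] by force
  define c' where "c' = c(b := 1, p := 2)"
  have st': "wheel_stable n c'" unfolding c'_def using st b ps by (intro stable_upd) auto
  have "\<forall>v\<in>{1..n}. ind n ori v \<le> c' v" using le cb cp unfolding c'_def p_def by auto
  then have g: "goodA n c'" unfolding goodA_def using ac by blast
  have "SI n c' = SI n c + 2" unfolding c'_def using b ps d cb cp p_def by (simp add: SI_upd)
  then have m: "mu n c' < mu n c" using mu_less1[OF st'] by simp
  have "asm_trans n c' (c'(b := 0, p := 1, s := 2))"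
    using T4'[OF n st' b] d cs unfolding c'_def p_def s_def by auto
  moreover have "c'(b := 0, p := 1, s := 2) = c"
    unfolding c'_def using d cb cp cs p_def by (intro ext) auto
  ultimately show ?thesis using st' g m by auto
qed

lemma caseB3:
  assumes n: "n = 3" and st: "wheel_stable n c" and b: "b \<in> {1..n}" and cb: "c b = 0"
    and cs: "c (cyc_succ n b) = 1" and le: "\<forall>v\<in>{1..n}. ind n ori v \<le> c v"
    and ac: "cyc_acyclic n ori"
  shows "\<exists>c'. wheel_stable n c' \<and> goodA n c' \<and> mu n c' < mu n c \<and> asm_trans n c' c"
proof -
  have n3: "3 \<le> n" using n by simp
  define p where "p = cyc_pred n b"
  define s where "s = cyc_succ n b"
  have ps: "p \<in> {1..n}" "s \<in> {1..n}" using pred_in[OF b] succ_in[OF b] p_def s_def by auto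
  have d: "p \<noteq> b" "s \<noteq> b" "s \<noteq> p" using pred_neq[OF n3 b] succ_neq[OF n3 b] succ_neq_pred[OF n3 b]
    p_def s_def by auto
  have pp: "cyc_pred n p = s" using pp_eq_s3[OF n b] p_def s_def by simp
  have sb: "cyc_pred n s = b" using s_def b by simp
  have ib: "ind n ori b \<le> 0" using le b cb by force
  have zf: "\<not> ori p" "ori b" using zero_facts[OF b ib] p_def by auto
  have is1: "ind n ori s \<le> 1" using le ps cs s_def by force
  then have os: "ori s" using zf sb unfolding ind_def by (auto split: if_splits)
  have "ind n ori p = 2" using zf os pp unfolding ind_def by simp
  then have cp: "c p = 2" using le ps(1) stable_le[OF st ps(1)] by force
  define c' where "c' = c(b := 1, s := 2)"
  have st': "wheel_stable n c'" unfolding c'_def using st b ps by (intro stable_upd) auto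
  have "\<forall>v\<in>{1..n}. ind n ori v \<le> c' v" using le cb cs unfolding c'_def s_def by auto
  then have g: "goodA n c'" unfolding goodA_def using ac by blast
  have "SI n c' = SI n c + 2" unfolding c'_def using b ps d cb cs s_def by (simp add: SI_upd)
  then have m: "mu n c' < mu n c" using mu_less1[OF st'] by simp
  have "asm_trans n c' (c'(b := 0, s := 1, p := 2))"
    using T4[OF n st' b] d cp unfolding c'_def p_def s_def by auto
  moreover have "c'(b := 0, s := 1, p := 2) = c"
    unfolding c'_def using d cb cp cs s_def by (intro ext) auto
  ultimately show ?thesis using st' g m by auto
qed

lemma base_case:
  assumes n: "3 \<le> n" and st: "wheel_stable n c" and g: "goodA n c" and nz: "\<forall>v\<in>{1..n}. c v \<noteq> 0"
  shows "(asm_trans n)\<^sup>*\<^sup>* (mm n) c"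
proof -
  obtain ori where ac: "cyc_acyclic n ori" and le: "\<forall>v\<in>{1..n}. ind n ori v \<le> c v"
    using g unfolding goodA_def by blast
  have n0: "0 < n" using n by simp
  have "\<exists>v\<in>{1..n}. c v = 2"
  proof (rule ccontr)
    assume "\<not> ?thesis"
    then have c1: "\<forall>v\<in>{1..n}. c v = 1" using nz stable_le[OF st] by (metis One_nat_def le_Suc_eq le_zero_eq numeral_2_eq_2)
    have prp: "ori (cyc_pred n w) \<Longrightarrow> ori w" if w: "w \<in> {1..n}" for w
      using le w c1 unfolding ind_def by (metis add_le_same_cancel1 nat.simps(3) One_nat_def le_zero_eq)
    obtain j k where j: "j \<in> {1..n}" "ori j" and k: "k \<in> {1..n}" "\<not> ori k"
      using acyclic_nonconst[OF n ac] by blast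
    have all: "ori (rot n t j)" for t
    proof (induction t)
      case 0 then show ?case using j rot_0[OF j(1)] by simp
    next
      case (Suc t)
      have r: "rot n t j \<in> {1..n}" using rot_in[OF n0] .
      have "rot n (Suc t) j = cyc_succ n (rot n t j)" using rot_Suc[OF n0] .
      moreover have "cyc_pred n (cyc_succ n (rot n t j)) = rot n t j" using r by simp
      ultimately show ?case using prp[OF rot_in[OF n0, of "Suc t" j]] Suc by simp
    qed
    obtain t where "k = rot n t j" using rot_surj[OF j(1) k(1)] by blast
    then show False using all k by simp
  qed
  then obtain v where v: "v \<in> {1..n}" "c v = 2" by blast
  have "\<forall>w\<in>{1..n}. e1 n v w \<le> c w" using v nz unfolding e1_def by (auto simp: Suc_le_eq)
  moreover have "(asm_trans n)\<^sup>*\<^sup>* (mm n) (e1 n v)" using trans_mm_e1[OF n v(1)] by simp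
  ultimately show ?thesis using UC e1_stable st by blast
qed

lemma reach_good:
  "3 \<le> n \<Longrightarrow> wheel_stable n c \<Longrightarrow> goodA n c \<Longrightarrow> (asm_trans n)\<^sup>*\<^sup>* (mm n) c"
proof (induction "mu n c" arbitrary: c rule: less_induct)
  case less
  note n = less.prems(1) and st = less.prems(2) and g = less.prems(3)
  show ?case
  proof (cases "\<forall>v\<in>{1..n}. c v \<noteq> 0")
    case True then show ?thesis using base_case[OF n st g] by simp
  next
    case False
    then obtain b where b: "b \<in> {1..n}" and cb: "c b = 0" by blast
    obtain ori where ac: "cyc_acyclic n ori" and le: "\<forall>v\<in>{1..n}. ind n ori v \<le> c v"
      using g unfolding goodA_def by blast
    have ps: "cyc_pred n b \<in> {1..n}" "cyc_succ n b \<in> {1..n}" using pred_in[OF b] succ_in[OF b] by auto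
    have ib: "ind n ori b \<le> 0" using le b cb by force
    have zf: "\<not> ori (cyc_pred n b)" "ori b" using zero_facts[OF b ib] by auto
    have "ind n ori (cyc_pred n b) \<ge> 1" using zf unfolding ind_def by simp
    then have cp1: "c (cyc_pred n b) \<ge> 1" using le ps(1) by force
    have "ind n ori (cyc_succ n b) \<ge> 1" using zf b unfolding ind_def by simp
    then have cs1: "c (cyc_succ n b) \<ge> 1" using le ps(2) by force
    have "\<exists>c'. wheel_stable n c' \<and> goodA n c' \<and> mu n c' < mu n c \<and> asm_trans n c' c"
    proof (cases "c (cyc_pred n b) = 1")
      case True
      then show ?thesis
      proof (cases "n = 3")
        case True then show ?thesis using caseA3[OF True st b cb _ le ac] `c (cyc_pred n b) = 1` by blast
      next
        case False then have "4 \<le> n" using n by simp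
        then show ?thesis using caseA4[OF _ st b cb _ le] `c (cyc_pred n b) = 1` by blast
      qed
    next
      case F1: False
      show ?thesis
      proof (cases "c (cyc_succ n b) = 1")
        case True
        then show ?thesis
        proof (cases "n = 3")
          case True then show ?thesis using caseB3[OF True st b cb _ le ac] `c (cyc_succ n b) = 1` by blast
        next
          case False then have "4 \<le> n" using n by simp
          then show ?thesis using caseB4[OF _ st b cb _ le] `c (cyc_succ n b) = 1` by blast
        qed
      next
        case False
        have "c (cyc_pred n b) = 2" using F1 cp1 stable_le[OF st ps(1)] by simp
        moreover have "c (cyc_succ n b) = 2" using False cs1 stable_le[OF st ps(2)] by simp
        ultimately show ?thesis using caseC[OF n st b cb _ _ le] by blast
      qed
    qed
    then obtain c' where c': "wheel_stable n c'" "goodA n c'" "mu n c' < mu n c" "asm_trans n c' c" by blast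
    have "(asm_trans n)\<^sup>*\<^sup>* (mm n) c'" using less.hyps[OF c'(3) n c'(1) c'(2)] .
    then show ?thesis using c'(4) by simp
  qed
qed

lemma ge1_two_goodA:
  assumes n: "3 \<le> n" and ge: "\<forall>w\<in>{1..n}. 1 \<le> c w" and v: "v \<in> {1..n}" "c v = 2"
  shows "goodA n c"
proof -
  define ori where "ori = (\<lambda>k. k \<noteq> v)"
  have "cyc_acyclic n ori"
    using acyclic_if[OF n succ_in[OF v(1)] _ v(1), of ori] succ_neq[OF n v(1)] unfolding ori_def by auto
  moreover have "ind n ori w \<le> c w" if w: "w \<in> {1..n}" for w
  proof (cases "w = v")
    case True then show ?thesis using v pred_neq[OF n v(1)] unfolding ind_def ori_def by simp
  next
    case False then show ?thesis using ge w unfolding ind_def ori_def by auto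
  qed
  ultimately show ?thesis unfolding goodA_def by blast
qed

lemma reach_goodS:
  assumes n: "3 \<le> n" and st: "wheel_stable n c" and g: "goodS n c"
  shows "(ssm_trans n)\<^sup>*\<^sup>* (mm n) c"
proof (cases "goodA n c")
  case True then show ?thesis using asm_ssm_transs[OF n reach_good[OF n st True]] by simp
next
  case False
  obtain ori where le: "\<forall>v\<in>{1..n}. ind n ori v \<le> c v" using g unfolding goodS_def by blast
  have const: "\<not> (\<exists>j\<in>{1..n}. \<exists>k\<in>{1..n}. ori j \<and> \<not> ori k)"
  proof
    assume "\<exists>j\<in>{1..n}. \<exists>k\<in>{1..n}. ori j \<and> \<not> ori k"
    then obtain j k where jk: "j \<in> {1..n}" "k \<in> {1..n}" "ori j" "\<not> ori k" by blast
    have "cyc_acyclic n ori" using acyclic_if[OF n jk(1) jk(3) jk(2) jk(4)] .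
    then show False using False le unfolding goodA_def by blast
  qed
  have ge: "\<forall>w\<in>{1..n}. 1 \<le> c w"
  proof
    fix w assume w: "w \<in> {1..n}"
    have pw: "cyc_pred n w \<in> {1..n}" using pred_in[OF w] .
    have "ind n ori w = 1"
    proof (cases "ori w")
      case True
      then have "ori (cyc_pred n w)" using const w pw by blast
      then show ?thesis using True unfolding ind_def by simp
    next
      case False
      then have "\<not> ori (cyc_pred n w)" using const w pw by blast
      then show ?thesis using False unfolding ind_def by simp
    qed
    then show "1 \<le> c w" using le w by force
  qed
  have "\<forall>w\<in>{1..n}. c w = 1"
  proof
    fix w assume w: "w \<in> {1..n}"
    have "c w \<noteq> 2" using ge1_two_goodA[OF n ge w] False by blast
    then show "c w = 1" using ge w stable_le[OF st w] by force
  qed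
  then have c1: "c = ones n" unfolding ones_def using stable_out[OF st] by (intro ext) auto
  have b1: "(1::nat) \<in> {1..n}" using n by simp
  have "(asm_trans n)\<^sup>*\<^sup>* (mm n) (zt n 1)"
  proof -
    have "wheel_stable n (zt n 1)" unfolding wheel_stable_def zt_def by auto
    then show ?thesis using reach_good[OF n _ zt_goodA[OF n b1]] by blast
  qed
  then have "(ssm_trans n)\<^sup>*\<^sup>* (mm n) (zt n 1)" using asm_ssm_transs[OF n] by blast
  then show ?thesis using T6[OF n b1] c1 by simp
qed

theorem mainTheorem2:
  fixes n :: nat and c :: "nat \<Rightarrow> nat"
  assumes "n \<ge> 3" and "wheel_stable n c"
  shows "(ssm_recurrent n c \<longleftrightarrow> (\<exists>ori. \<forall>i\<in>{1..n}. c i \<ge> cyc_indeg n ori i))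
       \<and> (asm_recurrent n c \<longleftrightarrow> (\<exists>ori. cyc_acyclic n ori \<and> (\<forall>i\<in>{1..n}. c i \<ge> cyc_indeg n ori i)))"
proof -
  have n: "3 \<le> n" using assms(1) .
  note st = assms(2)
  have S: "ssm_recurrent n c \<longleftrightarrow> goodS n c"
  proof
    assume r: "ssm_recurrent n c"
    have "(ssm_trans n)\<^sup>*\<^sup>* c (mm n)" using asm_ssm_transs[OF n to_mm[OF st]] .
    then have "(ssm_trans n)\<^sup>*\<^sup>* (mm n) c" using r unfolding ssm_recurrent_def by blast
    then show "goodS n c" using ssm_transs_goodS[OF n] goodA_goodS[OF mm_goodA[OF n]] by blast
  next
    assume g: "goodS n c"
    show "ssm_recurrent n c" unfolding ssm_recurrent_def
    proof (intro conjI allI impI)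
      show "wheel_stable n c" using st .
      fix d assume "(ssm_trans n)\<^sup>*\<^sup>* c d"
      then have sd: "wheel_stable n d" using strans_stable st by blast
      have "(ssm_trans n)\<^sup>*\<^sup>* d (mm n)" using asm_ssm_transs[OF n to_mm[OF sd]] .
      then show "(ssm_trans n)\<^sup>*\<^sup>* d c" using reach_goodS[OF n st g] by simp
    qed
  qed
  have A: "asm_recurrent n c \<longleftrightarrow> goodA n c"
  proof
    assume r: "asm_recurrent n c"
    have "(asm_trans n)\<^sup>*\<^sup>* (mm n) c" using r to_mm[OF st] unfolding asm_recurrent_def by blast
    then show "goodA n c" using asm_transs_goodA[OF n] mm_goodA[OF n] by blast
  next
    assume g: "goodA n c"
    show "asm_recurrent n c" unfolding asm_recurrent_def
    proof (intro conjI allI impI)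
      show "wheel_stable n c" using st .
      fix d assume "(asm_trans n)\<^sup>*\<^sup>* c d"
      then have sd: "wheel_stable n d" using trans_stable st by blast
      then show "(asm_trans n)\<^sup>*\<^sup>* d c" using to_mm[OF sd] reach_good[OF n st g] by simp
    qed
  qed
  show ?thesis using S A goodS_iff[OF n] goodA_iff[OF n] by simp
qed


end
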